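(* Let $I$ be a finite set and $T$ a tree on $I$. The lattice $[\hat{0},T]$ (an interval of $\operatorname{For}(I)$) is EL-shellable.
   Context: A tree on a finite set $I$ is a (non-planar) rooted binary tree whose leaves are bijectively labeled by $I$: vertices are inner vertices (valence $3$) and leaves and the root (valence $1$), edges oriented towards the root; one-leaf trees are allowed. A forest on $I$ is a set of trees whose leaf sets partition $I$. For forests $F,G$ on $I$, $F \leq G$ if there is a continuous map $F\to G$ which (D1) is increasing with respect to orientation towards the root, (D2) maps inner vertices to inner vertices injectively, (D3) is the identity of $I$ on leaves, (D4) is injective on each tree of $F$. This gives the poset $\operatorname{For}(I)$, graded by the number of inner vertices, with minimum $\hat{0}$ (no inner vertices). An edge-labeling of a poset $P$ is a map $\lambda$ from the set of covering pairs $x\lhd y$ to $\mathbb{N}$; a saturated chain $x_0\lhd\dots\lhd x_k$ has label $(\lambda(x_0,x_1),\dots,\lambda(x_{k-1},x_k))$ and is increasing if this sequence is weakly increasing. An EL-labeling is an edge-labeling such that every interval $[x,y]$ has exactly one increasing saturated chain from $x$ to $y$, and its label is strictly lexicographically smaller than the label of every other saturated chain from $x$ to $y$. A graded poset is EL-shellable if it admits an EL-labeling. *)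

theory Defs
  imports Main
begin

text \<open>A rooted binary (non-planar) forest whose leaves are labelled bijectively by I is
encoded by the set of leaf sets ("clusters") of its non-root vertices: leaf i gives {i},
an inner vertex gives the set of leaves below it. The root of each tree is a valence-1
vertex whose leaf set equals that of its unique child, so it carries no further
information.\<close>

definition children :: "'a set set \<Rightarrow> 'a set \<Rightarrow> 'a set \<Rightarrow> 'a set \<Rightarrow> bool" where
  "children F C A B \<longleftrightarrow> A \<in> F \<and> B \<in> F \<and> A \<noteq> {} \<and> B \<noteq> {} \<and> A \<inter> B = {} \<and> A \<union> B = C"

definition inner :: "'a set set \<Rightarrow> 'a set set" where
  "inner F = {C \<in> F. \<not> (\<exists>i. C = {i})}"

definition is_forest :: "'a set \<Rightarrow> 'a set set \<Rightarrow> bool" where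
  "is_forest I F \<longleftrightarrow>
     (\<forall>C\<in>F. C \<noteq> {} \<and> C \<subseteq> I) \<and>
     (\<forall>i\<in>I. {i} \<in> F) \<and>
     (\<forall>A\<in>F. \<forall>B\<in>F. A \<subseteq> B \<or> B \<subseteq> A \<or> A \<inter> B = {}) \<and>
     (\<forall>C\<in>inner F. \<exists>A B. children F C A B)"

definition is_tree :: "'a set \<Rightarrow> 'a set set \<Rightarrow> bool" where
  "is_tree I T \<longleftrightarrow> is_forest I T \<and> I \<in> T"

definition zero_forest :: "'a set \<Rightarrow> 'a set set" where
  "zero_forest I = {{i} | i. i \<in> I}"

text \<open>A map F \<rightarrow> G as in (D1)-(D4) is encoded by its values phi on
the non-root vertices (clusters) of F, taking values in vertices (clusters) of G:
(D3) phi is the identity on leaves; (D2) phi maps inner vertices to inner vertices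
injectively; (D1) continuity plus monotonicity: the edge from a child A of C is sent to
the upward path from phi A to phi C in G (so phi A \<subseteq> phi C); (D4) injectivity on
each tree: the two upward paths from phi A and phi B (A, B the children of C) meet only
at phi C, i.e. phi C is the smallest cluster of G containing phi A \<union> phi B. Roots of F
can always be sent to the root of the corresponding tree of G.\<close>
definition forest_le :: "'a set \<Rightarrow> 'a set set \<Rightarrow> 'a set set \<Rightarrow> bool" where
  "forest_le I F G \<longleftrightarrow> is_forest I F \<and> is_forest I G \<and>
     (\<exists>\<phi>. (\<forall>i\<in>I. \<phi> {i} = {i}) \<and>
          (\<forall>C\<in>inner F. \<phi> C \<in> inner G) \<and>
          inj_on \<phi> (inner F) \<and>
          (\<forall>C\<in>inner F. \<forall>A B. children F C A B \<longrightarrow>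
              \<phi> A \<subseteq> \<phi> C \<and> \<phi> B \<subseteq> \<phi> C \<and>
              (\<forall>D\<in>G. \<phi> A \<union> \<phi> B \<subseteq> D \<longrightarrow> \<phi> C \<subseteq> D)))"

definition covers :: "'x set \<Rightarrow> ('x \<Rightarrow> 'x \<Rightarrow> bool) \<Rightarrow> 'x \<Rightarrow> 'x \<Rightarrow> bool" where
  "covers P le x y \<longleftrightarrow> x \<in> P \<and> y \<in> P \<and> le x y \<and> x \<noteq> y \<and>
     \<not> (\<exists>z\<in>P. le x z \<and> le z y \<and> z \<noteq> x \<and> z \<noteq> y)"

definition sat_chain :: "'x set \<Rightarrow> ('x \<Rightarrow> 'x \<Rightarrow> bool) \<Rightarrow> 'x \<Rightarrow> 'x \<Rightarrow> 'x list \<Rightarrow> bool" where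
  "sat_chain P le x y cs \<longleftrightarrow> cs \<noteq> [] \<and> hd cs = x \<and> last cs = y \<and> set cs \<subseteq> P \<and>
     (\<forall>i. Suc i < length cs \<longrightarrow> covers P le (cs ! i) (cs ! Suc i))"

definition chain_label :: "('x \<Rightarrow> 'x \<Rightarrow> nat) \<Rightarrow> 'x list \<Rightarrow> nat list" where
  "chain_label lab cs = map (\<lambda>i. lab (cs ! i) (cs ! Suc i)) [0..<length cs - 1]"

definition EL_labeling :: "'x set \<Rightarrow> ('x \<Rightarrow> 'x \<Rightarrow> bool) \<Rightarrow> ('x \<Rightarrow> 'x \<Rightarrow> nat) \<Rightarrow> bool" where
  "EL_labeling P le lab \<longleftrightarrow>
     (\<forall>x\<in>P. \<forall>y\<in>P. le x y \<longrightarrow>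
        (\<exists>!cs. sat_chain P le x y cs \<and> sorted (chain_label lab cs)) \<and>
        (\<forall>cs cs'. sat_chain P le x y cs \<and> sorted (chain_label lab cs) \<and>
                  sat_chain P le x y cs' \<and> cs' \<noteq> cs \<longrightarrow>
                  (chain_label lab cs, chain_label lab cs') \<in> lexord {(a, b). a < b}))"

definition graded :: "'x set \<Rightarrow> ('x \<Rightarrow> 'x \<Rightarrow> bool) \<Rightarrow> bool" where
  "graded P le \<longleftrightarrow> finite P \<and> (\<exists>\<rho>::'x \<Rightarrow> nat. \<forall>x\<in>P. \<forall>y\<in>P. covers P le x y \<longrightarrow> \<rho> y = \<rho> x + 1)"

definition EL_shellable :: "'x set \<Rightarrow> ('x \<Rightarrow> 'x \<Rightarrow> bool) \<Rightarrow> bool" where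
  "EL_shellable P le \<longleftrightarrow> graded P le \<and> (\<exists>lab. EL_labeling P le lab)"

definition forest_interval :: "'a set \<Rightarrow> 'a set set \<Rightarrow> 'a set set \<Rightarrow> 'a set set set" where
  "forest_interval I F G = {H. is_forest I H \<and> forest_le I F H \<and> forest_le I H G}"

end

theory Submission
  imports Defs
begin


definition lam :: "'a set set \<Rightarrow> bool" where
  "lam G \<longleftrightarrow> (\<forall>A\<in>G. \<forall>B\<in>G. A \<subseteq> B \<or> B \<subseteq> A \<or> A \<inter> B = {})"

definition lub :: "'a set set \<Rightarrow> 'a set \<Rightarrow> 'a set" where
  "lub G X = (THE D. D \<in> G \<and> X \<subseteq> D \<and> (\<forall>D'\<in>G. X \<subseteq> D' \<longrightarrow> D \<subseteq> D'))"

lemma lub_eq: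
  assumes "D \<in> G" "X \<subseteq> D" "\<forall>D'\<in>G. X \<subseteq> D' \<longrightarrow> D \<subseteq> D'"
  shows "lub G X = D"
  unfolding lub_def
proof (rule the_equality)
  show "D \<in> G \<and> X \<subseteq> D \<and> (\<forall>D'\<in>G. X \<subseteq> D' \<longrightarrow> D \<subseteq> D')" using assms by blast
next
  fix D2 assume "D2 \<in> G \<and> X \<subseteq> D2 \<and> (\<forall>D'\<in>G. X \<subseteq> D' \<longrightarrow> D2 \<subseteq> D')"
  then show "D2 = D" using assms by blast
qed

lemma lam_cmp:
  assumes "lam G" "A \<in> G" "B \<in> G" "x \<in> A" "x \<in> B"
  shows "A \<subseteq> B \<or> B \<subseteq> A"
  using assms unfolding lam_def by blast

lemma lub_ex:
  assumes "finite G" "lam G" "X \<noteq> {}" "D0 \<in> G" "X \<subseteq> D0"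
  shows "lub G X \<in> G \<and> X \<subseteq> lub G X \<and> (\<forall>D'\<in>G. X \<subseteq> D' \<longrightarrow> lub G X \<subseteq> D')"
proof -
  let ?Ch = "{D \<in> G. X \<subseteq> D}"
  have "finite ?Ch" "?Ch \<noteq> {}" using assms by auto
  then obtain m where m: "m \<in> ?Ch" "\<forall>b\<in>?Ch. b \<subseteq> m \<longrightarrow> m = b"
    using finite_has_minimal[of ?Ch] by blast
  obtain x where x: "x \<in> X" using assms(3) by blast
  have least: "\<forall>D'\<in>G. X \<subseteq> D' \<longrightarrow> m \<subseteq> D'"
  proof (intro ballI impI)
    fix D' assume "D' \<in> G" "X \<subseteq> D'"
    then have "D' \<subseteq> m \<or> m \<subseteq> D'" using lam_cmp[OF assms(2), of D' m x] m x by blast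
    then show "m \<subseteq> D'" using m \<open>D' \<in> G\<close> \<open>X \<subseteq> D'\<close> by blast
  qed
  have "lub G X = m" using lub_eq[of m G X] m least by blast
  then show ?thesis using m least by simp
qed

lemma forest_ne: "is_forest I F \<Longrightarrow> C \<in> F \<Longrightarrow> C \<noteq> {}"
  by (simp add: is_forest_def)
lemma forest_sub: "is_forest I F \<Longrightarrow> C \<in> F \<Longrightarrow> C \<subseteq> I"
  by (simp add: is_forest_def)
lemma forest_sing: "is_forest I F \<Longrightarrow> i \<in> I \<Longrightarrow> {i} \<in> F"
  by (simp add: is_forest_def)
lemma forest_ch: "is_forest I F \<Longrightarrow> C \<in> inner F \<Longrightarrow> \<exists>A B. children F C A B"
  by (simp add: is_forest_def)
lemma forest_le_forests: "forest_le I F G \<Longrightarrow> is_forest I F \<and> is_forest I G"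
  by (simp add: forest_le_def)

lemma forest_lam: "is_forest I F \<Longrightarrow> lam F"
  unfolding is_forest_def lam_def by blast

lemma forest_fin: "finite I \<Longrightarrow> is_forest I F \<Longrightarrow> finite F"
  unfolding is_forest_def by (meson Pow_iff finite_Pow_iff rev_finite_subset subsetI)

lemma children_sym: "children F C A B \<Longrightarrow> children F C B A"
  unfolding children_def by blast

lemma inner_iff: "C \<in> inner F \<longleftrightarrow> C \<in> F \<and> \<not> (\<exists>i. C = {i})"
  unfolding inner_def by blast

lemma children_props:
  assumes "children F C A B"
  shows "A \<in> F" "B \<in> F" "A \<noteq> {}" "B \<noteq> {}" "A \<inter> B = {}" "A \<union> B = C" "A \<subset> C" "B \<subset> C"
  using assms unfolding children_def by auto

lemma forest_le_D:
  assumes finI: "finite I" and le: "forest_le I F G"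
  shows "(\<forall>C\<in>F. \<exists>D\<in>G. C \<subseteq> D) \<and> inj_on (lub G) (inner F)"
proof -
  have fF: "is_forest I F" and fG: "is_forest I G" using forest_le_forests[OF le] by auto
  from le have "\<exists>\<phi>. (\<forall>i\<in>I. \<phi> {i} = {i}) \<and>
          (\<forall>C\<in>inner F. \<phi> C \<in> inner G) \<and>
          inj_on \<phi> (inner F) \<and>
          (\<forall>C\<in>inner F. \<forall>A B. children F C A B \<longrightarrow>
              \<phi> A \<subseteq> \<phi> C \<and> \<phi> B \<subseteq> \<phi> C \<and>
              (\<forall>D\<in>G. \<phi> A \<union> \<phi> B \<subseteq> D \<longrightarrow> \<phi> C \<subseteq> D))" by (simp add: forest_le_def)
  then obtain \<phi> where ph1: "\<forall>i\<in>I. \<phi> {i} = {i}" and ph2: "\<forall>C\<in>inner F. \<phi> C \<in> inner G"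
    and ph3: "inj_on \<phi> (inner F)"
    and ph4: "\<forall>C\<in>inner F. \<forall>A B. children F C A B \<longrightarrow>
              \<phi> A \<subseteq> \<phi> C \<and> \<phi> B \<subseteq> \<phi> C \<and> (\<forall>D\<in>G. \<phi> A \<union> \<phi> B \<subseteq> D \<longrightarrow> \<phi> C \<subseteq> D)"
    by (elim exE conjE)
  have finG: "finite G" using forest_fin[OF finI fG] .
  have lamG: "lam G" using forest_lam[OF fG] .
  have key: "C \<in> F \<Longrightarrow> \<phi> C \<in> G \<and> C \<subseteq> \<phi> C \<and> lub G C = \<phi> C" for C
  proof (induction "card C" arbitrary: C rule: less_induct)
    case less
    have CI: "C \<subseteq> I" "C \<noteq> {}" using forest_ne[OF fF less.prems] forest_sub[OF fF less.prems] by auto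
    show ?case
    proof (cases "\<exists>i. C = {i}")
      case True
      then obtain i where i: "C = {i}" by blast
      then have "i \<in> I" using CI by auto
      then have "\<phi> C = {i}" "{i} \<in> G" using ph1 forest_sing[OF fG] i by auto
      moreover have "lub G C = {i}" using lub_eq[of "{i}" G C] i \<open>{i} \<in> G\<close> by simp
      ultimately show ?thesis using i by simp
    next
      case False
      then have Ci: "C \<in> inner F" using less.prems unfolding inner_def by simp
      then obtain A B where ch: "children F C A B" using forest_ch[OF fF] by blast
      have fC: "finite C" using CI finI by (meson rev_finite_subset)
      note AB = children_props[OF ch]
      have cA: "card A < card C" "card B < card C" using AB(7,8) fC by (simp_all add: psubset_card_mono)
      have IA: "\<phi> A \<in> G \<and> A \<subseteq> \<phi> A \<and> lub G A = \<phi> A" using less.hyps[OF cA(1) AB(1)] .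
      have IB: "\<phi> B \<in> G \<and> B \<subseteq> \<phi> B \<and> lub G B = \<phi> B" using less.hyps[OF cA(2) AB(2)] .
      have p: "\<phi> A \<subseteq> \<phi> C" "\<phi> B \<subseteq> \<phi> C" "\<forall>D\<in>G. \<phi> A \<union> \<phi> B \<subseteq> D \<longrightarrow> \<phi> C \<subseteq> D"
        using ph4 Ci ch by blast+
      have G1: "\<phi> C \<in> G" using ph2 Ci unfolding inner_def by blast
      have G2: "C \<subseteq> \<phi> C" using p(1,2) IA IB AB(6) by blast
      have G3: "\<forall>D'\<in>G. C \<subseteq> D' \<longrightarrow> \<phi> C \<subseteq> D'"
      proof (intro ballI impI)
        fix D' assume D': "D' \<in> G" "C \<subseteq> D'"
        have "A \<subseteq> D'" "B \<subseteq> D'" using D'(2) AB(6) by auto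
        then have "lub G A \<subseteq> D'" "lub G B \<subseteq> D'"
          using lub_ex[OF finG lamG AB(3) D'(1)] lub_ex[OF finG lamG AB(4) D'(1)] D'(1) by blast+
        then show "\<phi> C \<subseteq> D'" using p(3) IA IB D'(1) by simp
      qed
      show ?thesis using lub_eq[of "\<phi> C" G C, OF G1 G2 G3] G1 G2 by simp
    qed
  qed
  have ex: "\<forall>C\<in>F. \<exists>D\<in>G. C \<subseteq> D" using key by blast
  have "\<forall>C\<in>inner F. lub G C = \<phi> C" using key unfolding inner_def by simp
  then have "inj_on (lub G) (inner F)" using ph3 inj_on_cong[of "inner F" "lub G" \<phi>] by simp
  then show ?thesis using ex by simp
qed

lemma forest_le_I:
  assumes finI: "finite I" and fF: "is_forest I F" and fG: "is_forest I G"
    and ex: "\<forall>C\<in>F. \<exists>D\<in>G. C \<subseteq> D" and inj: "inj_on (lub G) (inner F)"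
  shows "forest_le I F G"
proof -
  have finG: "finite G" using forest_fin[OF finI fG] .
  have lamG: "lam G" using forest_lam[OF fG] .
  have L: "lub G C \<in> G \<and> C \<subseteq> lub G C \<and> (\<forall>D'\<in>G. C \<subseteq> D' \<longrightarrow> lub G C \<subseteq> D')" if "C \<in> F" for C
  proof -
    have "\<exists>D\<in>G. C \<subseteq> D" using ex that by simp
    then obtain D where D: "D \<in> G" "C \<subseteq> D" by (elim bexE) simp
    have "C \<noteq> {}" using forest_ne[OF fF that] .
    from lub_ex[OF finG lamG this D] show ?thesis .
  qed
  have s1: "\<forall>i\<in>I. lub G {i} = {i}"
  proof
    fix i assume "i \<in> I"
    then have "{i} \<in> G" using forest_sing[OF fG] by simp
    then show "lub G {i} = {i}" by (rule lub_eq) auto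
  qed
  have s2: "\<forall>C\<in>inner F. lub G C \<in> inner G"
  proof
    fix C assume C: "C \<in> inner F"
    then obtain A B where ch: "children F C A B" using forest_ch[OF fF] by blast
    note AB = children_props[OF ch]
    obtain a b where "a \<in> A" "b \<in> B" using AB(3,4) by blast
    then have ab: "a \<in> C" "b \<in> C" "a \<noteq> b" using AB(5,6) by auto
    have CF: "C \<in> F" using C unfolding inner_def by simp
    have sub: "C \<subseteq> lub G C" "lub G C \<in> G" using L[OF CF] by auto
    have "\<not> (\<exists>i. lub G C = {i})"
    proof
      assume "\<exists>i. lub G C = {i}"
      then obtain i where "lub G C = {i}" by (elim exE)
      then have "a = i" "b = i" using sub(1) ab(1,2) by auto
      then show False using ab(3) by simp
    qed
    then show "lub G C \<in> inner G" using sub(2) unfolding inner_def by simp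
  qed
  have s4: "\<forall>C\<in>inner F. \<forall>A B. children F C A B \<longrightarrow>
              lub G A \<subseteq> lub G C \<and> lub G B \<subseteq> lub G C \<and> (\<forall>D\<in>G. lub G A \<union> lub G B \<subseteq> D \<longrightarrow> lub G C \<subseteq> D)"
  proof (intro ballI allI impI)
    fix C A B assume C: "C \<in> inner F" and ch: "children F C A B"
    have CF: "C \<in> F" using C unfolding inner_def by simp
    note AB = children_props[OF ch]
    have LC: "lub G C \<in> G" "C \<subseteq> lub G C" "\<forall>D'\<in>G. C \<subseteq> D' \<longrightarrow> lub G C \<subseteq> D'" using L[OF CF] by auto
    have LA: "lub G A \<in> G" "A \<subseteq> lub G A" "\<forall>D'\<in>G. A \<subseteq> D' \<longrightarrow> lub G A \<subseteq> D'" using L[OF AB(1)] by auto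
    have LB: "lub G B \<in> G" "B \<subseteq> lub G B" "\<forall>D'\<in>G. B \<subseteq> D' \<longrightarrow> lub G B \<subseteq> D'" using L[OF AB(2)] by auto
    have 1: "lub G A \<subseteq> lub G C" using LA(3) LC(1,2) AB(6) by blast
    have 2: "lub G B \<subseteq> lub G C" using LB(3) LC(1,2) AB(6) by blast
    have 3: "\<forall>D\<in>G. lub G A \<union> lub G B \<subseteq> D \<longrightarrow> lub G C \<subseteq> D"
      using LC(3) LA(2) LB(2) AB(6) by blast
    show "lub G A \<subseteq> lub G C \<and> lub G B \<subseteq> lub G C \<and> (\<forall>D\<in>G. lub G A \<union> lub G B \<subseteq> D \<longrightarrow> lub G C \<subseteq> D)"
      using 1 2 3 by simp
  qed
  have "\<exists>\<phi>. (\<forall>i\<in>I. \<phi> {i} = {i}) \<and>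
          (\<forall>C\<in>inner F. \<phi> C \<in> inner G) \<and>
          inj_on \<phi> (inner F) \<and>
          (\<forall>C\<in>inner F. \<forall>A B. children F C A B \<longrightarrow>
              \<phi> A \<subseteq> \<phi> C \<and> \<phi> B \<subseteq> \<phi> C \<and>
              (\<forall>D\<in>G. \<phi> A \<union> \<phi> B \<subseteq> D \<longrightarrow> \<phi> C \<subseteq> D))"
    by (rule exI[of _ "lub G"]) (intro conjI s1 s2 inj s4)
  then show ?thesis unfolding forest_le_def using fF fG by simp
qed



locale tr =
  fixes I :: "'a set" and T :: "'a set set"
  assumes finI: "finite I" and tree: "is_tree I T"
begin

lemma Tf: "is_forest I T" using tree unfolding is_tree_def by simp
lemma IT: "I \<in> T" using tree unfolding is_tree_def by simp
lemma finT: "finite T" using forest_fin[OF finI Tf] .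
lemma lamT: "lam T" using forest_lam[OF Tf] .

abbreviation lt where "lt X \<equiv> lub T X"

lemma lt:
  assumes "X \<noteq> {}" "X \<subseteq> I"
  shows "lt X \<in> T" "X \<subseteq> lt X" "\<And>D. D \<in> T \<Longrightarrow> X \<subseteq> D \<Longrightarrow> lt X \<subseteq> D"
  using lub_ex[OF finT lamT assms(1) IT assms(2)] by auto

lemma lt2:
  assumes "p \<in> I" "q \<in> I"
  shows "lt {p,q} \<in> T" "p \<in> lt {p,q}" "q \<in> lt {p,q}" "\<And>D. D \<in> T \<Longrightarrow> p \<in> D \<Longrightarrow> q \<in> D \<Longrightarrow> lt {p,q} \<subseteq> D"
proof -
  have "{p,q} \<noteq> {}" "{p,q} \<subseteq> I" using assms by auto
  note L = lt[OF this]
  show "lt {p,q} \<in> T" "p \<in> lt {p,q}" "q \<in> lt {p,q}" using L(1,2) by auto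
  show "\<And>D. D \<in> T \<Longrightarrow> p \<in> D \<Longrightarrow> q \<in> D \<Longrightarrow> lt {p,q} \<subseteq> D" using L(3) by simp
qed

lemma lt_comm: "lt {p,q} = lt {q,p}"
  by (simp add: insert_commute)

lemma T_cmp: "A \<in> T \<Longrightarrow> B \<in> T \<Longrightarrow> x \<in> A \<Longrightarrow> x \<in> B \<Longrightarrow> A \<subseteq> B \<or> B \<subseteq> A"
  using lam_cmp[OF lamT] by blast

lemma lt_sing: "i \<in> I \<Longrightarrow> lt {i} = {i}"
  using forest_sing[OF Tf] by (intro lub_eq) auto

lemma side_diff:
  assumes wT: "w \<in> T" and ch: "children T w L R" and p: "p \<in> L" and q: "q \<in> R"
  shows "lt {p,q} = w"
proof -
  note c = children_props[OF ch]
  have LI: "L \<subseteq> I" "R \<subseteq> I" using forest_sub[OF Tf c(1)] forest_sub[OF Tf c(2)] by auto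
  have pq: "p \<in> I" "q \<in> I" using LI p q by auto
  note u = lt2[OF pq]
  have "lt {p,q} \<subseteq> w" using u(4)[OF wT] p q c(6) by auto
  moreover have "L \<subseteq> lt {p,q}"
  proof -
    have "L \<subseteq> lt {p,q} \<or> lt {p,q} \<subseteq> L" using T_cmp[OF c(1) u(1) p u(2)] .
    moreover have "\<not> lt {p,q} \<subseteq> L" using u(3) q c(5) by auto
    ultimately show ?thesis by simp
  qed
  moreover have "R \<subseteq> lt {p,q}"
  proof -
    have "R \<subseteq> lt {p,q} \<or> lt {p,q} \<subseteq> R" using T_cmp[OF c(2) u(1) q u(3)] .
    moreover have "\<not> lt {p,q} \<subseteq> R" using u(2) p c(5) by auto
    ultimately show ?thesis by simp
  qed
  ultimately show ?thesis using c(6) by auto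
qed

lemma side_same:
  assumes ch: "children T w L R" and p: "p \<in> L" and q: "q \<in> L"
  shows "lt {p,q} \<subset> w"
proof -
  note c = children_props[OF ch]
  have "p \<in> I" "q \<in> I" using forest_sub[OF Tf c(1)] p q by auto
  then have "lt {p,q} \<subseteq> L" using lt2(4) c(1) p q by simp
  then show ?thesis using c(7) by auto
qed

lemma inner_w:
  assumes "p \<in> I" "q \<in> I" "p \<noteq> q"
  shows "lt {p,q} \<in> inner T"
proof -
  note u = lt2[OF assms(1,2)]
  have "\<not> (\<exists>i. lt {p,q} = {i})"
  proof
    assume "\<exists>i. lt {p,q} = {i}"
    then obtain i where "lt {p,q} = {i}" by (elim exE)
    then show False using u(2,3) assms(3) by auto
  qed
  then show ?thesis using u(1) unfolding inner_def by simp
qed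

lemma four_point:
  assumes I: "c \<in> I" "d \<in> I" "e \<in> I" "f \<in> I" and ne: "c \<noteq> d" "e \<noteq> f"
    and eq: "lt {c,d} = lt {e,f}"
  shows "(lt {c,e} \<subset> lt {c,d} \<and> lt {d,f} \<subset> lt {c,d}) \<or> (lt {c,f} \<subset> lt {c,d} \<and> lt {d,e} \<subset> lt {c,d})"
proof -
  define w where "w = lt {c,d}"
  have wi: "w \<in> inner T" using inner_w[OF I(1,2) ne(1)] w_def by simp
  then obtain L R where ch: "children T w L R" using forest_ch[OF Tf] by blast
  note cp = children_props[OF ch]
  have in_w: "c \<in> w" "d \<in> w" "e \<in> w" "f \<in> w" using lt2[OF I(1,2)] lt2[OF I(3,4)] eq w_def by auto
  have LR: "\<And>x. x \<in> w \<Longrightarrow> x \<in> L \<or> x \<in> R" using cp(6) by auto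
  have ss: "\<And>x y. x \<in> L \<Longrightarrow> y \<in> L \<Longrightarrow> lt {x,y} \<subset> w" using side_same[OF ch] by simp
  have ssR: "\<And>x y. x \<in> R \<Longrightarrow> y \<in> R \<Longrightarrow> lt {x,y} \<subset> w" using side_same[OF children_sym[OF ch]] by simp
  have cd: "\<not> (c \<in> L \<and> d \<in> L)" "\<not> (c \<in> R \<and> d \<in> R)" using ss[of c d] ssR[of c d] w_def by auto
  have ef: "\<not> (e \<in> L \<and> f \<in> L)" "\<not> (e \<in> R \<and> f \<in> R)" using ss[of e f] ssR[of e f] w_def eq by auto
  have "(c \<in> L \<and> e \<in> L \<and> d \<in> R \<and> f \<in> R) \<or> (c \<in> L \<and> f \<in> L \<and> d \<in> R \<and> e \<in> R) \<or>
        (c \<in> R \<and> e \<in> R \<and> d \<in> L \<and> f \<in> L) \<or> (c \<in> R \<and> f \<in> R \<and> d \<in> L \<and> e \<in> L)"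
    using LR[OF in_w(1)] LR[OF in_w(2)] LR[OF in_w(3)] LR[OF in_w(4)] cd ef by blast
  then have "(lt {c,e} \<subset> w \<and> lt {d,f} \<subset> w) \<or> (lt {c,f} \<subset> w \<and> lt {d,e} \<subset> w)"
    using ss ssR by blast
  then show ?thesis using w_def by simp
qed

lemma ultra:
  assumes I: "p \<in> I" "q \<in> I" "r \<in> I" and lt: "lt {p,q} \<subset> lt {q,r}"
  shows "lt {p,r} = lt {q,r}"
proof -
  note X = lt2[OF I(1,2)] and Y = lt2[OF I(2,3)] and Z = lt2[OF I(1,3)]
  have 1: "lt {p,r} \<subseteq> lt {q,r}" using Z(4)[OF Y(1)] X(2) Y(3) lt by auto
  have "lt {p,r} \<subseteq> lt {p,q} \<or> lt {p,q} \<subseteq> lt {p,r}" using T_cmp[OF Z(1) X(1) Z(2) X(2)] .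
  moreover have "\<not> lt {p,r} \<subseteq> lt {p,q}"
  proof
    assume "lt {p,r} \<subseteq> lt {p,q}"
    then have "r \<in> lt {p,q}" using Z(3) by auto
    then have "lt {q,r} \<subseteq> lt {p,q}" using Y(4)[OF X(1) X(3)] by simp
    then show False using lt by auto
  qed
  ultimately have "lt {p,q} \<subseteq> lt {p,r}" by simp
  then have "lt {q,r} \<subseteq> lt {p,r}" using Y(4)[OF Z(1)] X(3) Z(3) by auto
  then show ?thesis using 1 by auto
qed

end


definition rel :: "'a set set \<Rightarrow> ('a \<times> 'a) set" where
  "rel H = {(a,b). \<exists>C\<in>H. a \<in> C \<and> b \<in> C}"

lemma inner_two: "C \<in> H \<Longrightarrow> a \<in> C \<Longrightarrow> b \<in> C \<Longrightarrow> a \<noteq> b \<Longrightarrow> C \<in> inner H"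
  unfolding inner_def by auto

context tr
begin

definition P where "P = forest_interval I (zero_forest I) T"

lemma zero_forest: "is_forest I (zero_forest I)" "inner (zero_forest I) = {}"
  unfolding is_forest_def zero_forest_def inner_def by auto

lemma P_iff: "H \<in> P \<longleftrightarrow> is_forest I H \<and> inj_on lt (inner H)"
proof
  assume "H \<in> P"
  then have f: "is_forest I H" and le: "forest_le I H T" unfolding P_def forest_interval_def by auto
  show "is_forest I H \<and> inj_on lt (inner H)" using f forest_le_D[OF finI le] by simp
next
  assume a: "is_forest I H \<and> inj_on lt (inner H)"
  then have f: "is_forest I H" and inj: "inj_on lt (inner H)" by auto
  have "\<forall>C\<in>H. \<exists>D\<in>T. C \<subseteq> D" using forest_sub[OF f] IT by blast
  then have le: "forest_le I H T" using forest_le_I[OF finI f Tf _ inj] by simp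
  have "\<forall>C\<in>zero_forest I. \<exists>D\<in>H. C \<subseteq> D" using forest_sing[OF f] unfolding zero_forest_def by auto
  then have le0: "forest_le I (zero_forest I) H" using forest_le_I[OF finI zero_forest(1) f] zero_forest(2) by simp
  show "H \<in> P" unfolding P_def forest_interval_def using f le le0 by simp
qed

lemma lt_eq:
  assumes "X \<subseteq> w" "w \<in> T" "p \<in> X" "q \<in> X" "X \<subseteq> I" "lt {p,q} = w"
  shows "lt X = w"
proof -
  have ne: "X \<noteq> {}" using assms(3) by auto
  note L = lt[OF ne assms(5)]
  have "lt X \<subseteq> w" using L(3)[OF assms(2,1)] .
  moreover have "w \<subseteq> lt X" using lt2(4)[of p q "lt X"] L(1,2) assms by auto
  ultimately show ?thesis by simp
qed

context
  fixes H assumes fH: "is_forest I H" and inj: "inj_on lt (inner H)"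
begin

lemma H_ltI: "C \<in> H \<Longrightarrow> lt C \<in> T \<and> C \<subseteq> lt C \<and> (\<forall>D\<in>T. C \<subseteq> D \<longrightarrow> lt C \<subseteq> D)"
  using lt[OF forest_ne[OF fH] forest_sub[OF fH]] by simp

lemma ch_disj_aux:
  assumes Ci: "C \<in> inner H" and ch: "children H C A B" and sub: "lt A \<subseteq> lt B"
  shows False
proof -
  note c = children_props[OF ch]
  have CH: "C \<in> H" using Ci unfolding inner_def by simp
  note LA = H_ltI[OF c(1)] and LB = H_ltI[OF c(2)] and LC = H_ltI[OF CH]
  have "C \<subseteq> lt B" using LA LB sub c(6) by auto
  then have "lt C \<subseteq> lt B" using LC LB by simp
  moreover have "lt B \<subseteq> lt C" using LB LC c(6) by auto
  ultimately have eq: "lt B = lt C" by simp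
  show False
  proof (cases "B \<in> inner H")
    case True
    then have "B = C" using inj Ci eq unfolding inj_on_def by blast
    then show False using c(8) by simp
  next
    case False
    then obtain b where b: "B = {b}" using c(2) unfolding inner_def by auto
    then have "b \<in> I" using forest_sub[OF fH c(2)] by simp
    then have "lt B = {b}" using b lt_sing by simp
    then have "A \<subseteq> {b}" using LA sub by auto
    then show False using c(3,5) b by auto
  qed
qed

lemma ch_disj:
  assumes Ci: "C \<in> inner H" and ch: "children H C A B"
  shows "lt A \<inter> lt B = {}"
proof (rule ccontr)
  assume "lt A \<inter> lt B \<noteq> {}"
  then obtain x where x: "x \<in> lt A" "x \<in> lt B" by blast
  note c = children_props[OF ch]
  have "lt A \<subseteq> lt B \<or> lt B \<subseteq> lt A" using T_cmp[OF conjunct1[OF H_ltI[OF c(1)]] conjunct1[OF H_ltI[OF c(2)]] x] .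
  then show False using ch_disj_aux[OF Ci ch] ch_disj_aux[OF Ci children_sym[OF ch]] by auto
qed

lemma sub_child:
  assumes CH: "C \<in> H" and ps: "C \<subset> C'" and ch: "children H C' A B" and x: "x \<in> C" and xA: "x \<in> A"
  shows "C \<subseteq> A"
proof (rule ccontr)
  assume nA: "\<not> C \<subseteq> A"
  note c = children_props[OF ch]
  have "C \<subseteq> A \<or> A \<subseteq> C" using lam_cmp[OF forest_lam[OF fH] CH c(1) x xA] .
  then have AC: "A \<subseteq> C" using nA by simp
  obtain y where y: "y \<in> C" "y \<notin> A" using nA by auto
  then have yB: "y \<in> B" using ps c(6) by auto
  have "C \<subseteq> B \<or> B \<subseteq> C" using lam_cmp[OF forest_lam[OF fH] CH c(2) y(1) yB] .
  moreover have "\<not> C \<subseteq> B" using x xA c(5) by auto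
  ultimately have "B \<subseteq> C" by simp
  then have "C' \<subseteq> C" using AC c(6) by auto
  then show False using ps by auto
qed

lemma sub_child2:
  assumes CH: "C \<in> H" and ps: "C \<subset> C'" and ch: "children H C' A B"
  shows "C \<subseteq> A \<or> C \<subseteq> B"
proof -
  obtain x where x: "x \<in> C" using forest_ne[OF fH CH] by auto
  then have "x \<in> A \<or> x \<in> B" using ps children_props(6)[OF ch] by auto
  then show ?thesis using sub_child[OF CH ps ch x] sub_child[OF CH ps children_sym[OF ch] x] by auto
qed

lemma part1: "C' \<in> H \<Longrightarrow> C \<in> H \<Longrightarrow> C \<subseteq> C' \<Longrightarrow> C' \<inter> lt C = C"
proof (induction "card C'" arbitrary: C' rule: less_induct)
  case less
  show ?case
  proof (cases "C = C'")
    case True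
    then show ?thesis using H_ltI[OF less.prems(2)] by auto
  next
    case False
    then have ps: "C \<subset> C'" using less.prems(3) by auto
    obtain x where x: "x \<in> C" using forest_ne[OF fH less.prems(2)] by auto
    obtain y where y: "y \<in> C'" "y \<notin> C" using ps by auto
    have "C' \<in> inner H" using inner_two[OF less.prems(1), of x y] x y ps by auto
    then obtain A B where ch: "children H C' A B" using forest_ch[OF fH] by blast
    have fin: "finite C'" using forest_sub[OF fH less.prems(1)] finI by (meson rev_finite_subset)
    have main: "C' \<inter> lt C = C" if ch': "children H C' A' B'" and CA: "C \<subseteq> A'" for A' B'
    proof -
      note c = children_props[OF ch']
      have "card A' < card C'" using c(7) fin by (simp add: psubset_card_mono)
      then have IH: "A' \<inter> lt C = C" using less.hyps c(1) less.prems(2) CA by simp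
      have "C \<subseteq> lt A'" using H_ltI[OF c(1)] CA by auto
      then have "lt C \<subseteq> lt A'" using H_ltI[OF less.prems(2)] H_ltI[OF c(1)] by simp
      moreover have "lt A' \<inter> lt B' = {}" using ch_disj[OF \<open>C' \<in> inner H\<close> ch'] .
      moreover have "B' \<subseteq> lt B'" using H_ltI[OF c(2)] by simp
      ultimately have "B' \<inter> lt C = {}" by auto
      then show ?thesis using IH c(6) by auto
    qed
    show ?thesis using sub_child2[OF less.prems(2) ps ch] main[OF ch] main[OF children_sym[OF ch]] by auto
  qed
qed

lemma part2: "K \<in> H \<Longrightarrow> D \<in> T \<Longrightarrow> a \<in> K \<Longrightarrow> a \<in> D \<Longrightarrow> K \<inter> D \<in> H"
proof (induction "card K" arbitrary: K rule: less_induct)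
  case less
  show ?case
  proof (cases "\<exists>i. K = {i}")
    case True
    then have "K \<inter> D = K" using less.prems(3,4) by auto
    then show ?thesis using less.prems(1) by simp
  next
    case False
    then have Ki: "K \<in> inner H" using less.prems(1) unfolding inner_def by simp
    then obtain A B where ch: "children H K A B" using forest_ch[OF fH] by blast
    have fin: "finite K" using forest_sub[OF fH less.prems(1)] finI by (meson rev_finite_subset)
    have main: "K \<inter> D \<in> H" if ch': "children H K A' B'" and aA: "a \<in> A'" for A' B'
    proof (cases "lt K \<subseteq> D")
      case True
      then have "K \<inter> D = K" using H_ltI[OF less.prems(1)] by auto
      then show ?thesis using less.prems(1) by simp
    next
      case False
      note c = children_props[OF ch']
      note LA = H_ltI[OF c(1)] and LB = H_ltI[OF c(2)] and LK = H_ltI[OF less.prems(1)]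
      have disj: "lt A' \<inter> lt B' = {}" using ch_disj[OF Ki ch'] .
      have DB: "D \<inter> B' = {}"
      proof (rule ccontr)
        assume "D \<inter> B' \<noteq> {}"
        then obtain b where b: "b \<in> D" "b \<in> B'" by blast
        have aLA: "a \<in> lt A'" using LA aA by auto
        have bLB: "b \<in> lt B'" using LB b by auto
        have "D \<subseteq> lt A' \<or> lt A' \<subseteq> D" using T_cmp[OF less.prems(2) conjunct1[OF LA] less.prems(4) aLA] .
        moreover have "\<not> D \<subseteq> lt A'" using b(1) bLB disj by auto
        ultimately have 1: "lt A' \<subseteq> D" by simp
        have "D \<subseteq> lt B' \<or> lt B' \<subseteq> D" using T_cmp[OF less.prems(2) conjunct1[OF LB] b(1) bLB] .
        moreover have "\<not> D \<subseteq> lt B'" using less.prems(4) aLA disj by auto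
        ultimately have 2: "lt B' \<subseteq> D" by simp
        have "K \<subseteq> D" using 1 2 LA LB c(6) by auto
        then have "lt K \<subseteq> D" using LK less.prems(2) by simp
        then show False using False by simp
      qed
      then have eq: "K \<inter> D = A' \<inter> D" using c(6) by auto
      have "card A' < card K" using c(7) fin by (simp add: psubset_card_mono)
      then have "A' \<inter> D \<in> H" using less.hyps c(1) less.prems(2,4) aA by simp
      then show ?thesis using eq by simp
    qed
    have "a \<in> A \<or> a \<in> B" using less.prems(3) children_props(6)[OF ch] by auto
    then show ?thesis using main[OF ch] main[OF children_sym[OF ch]] by auto
  qed
qed

lemma rel_I: "(a,b) \<in> rel H \<Longrightarrow> a \<in> I \<and> b \<in> I"
  unfolding rel_def using forest_sub[OF fH] by auto

lemma blk:
  assumes a: "a \<in> I"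
  shows "rel H `` {a} \<in> H" "a \<in> rel H `` {a}" "\<And>C. C \<in> H \<Longrightarrow> a \<in> C \<Longrightarrow> C \<subseteq> rel H `` {a}"
proof -
  let ?S = "{C \<in> H. a \<in> C}"
  have "{a} \<in> ?S" using forest_sing[OF fH a] by simp
  moreover have "finite ?S" using forest_fin[OF finI fH] by simp
  ultimately obtain m where m: "m \<in> ?S" "\<forall>b\<in>?S. m \<subseteq> b \<longrightarrow> m = b"
    using finite_has_maximal[of ?S] by blast
  have mx: "C \<subseteq> m" if "C \<in> H" "a \<in> C" for C
  proof -
    have "C \<subseteq> m \<or> m \<subseteq> C" using lam_cmp[OF forest_lam[OF fH] that(1), of m a] m(1) that(2) by simp
    then show ?thesis using m(2) that by auto
  qed
  have eq: "rel H `` {a} = m"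
  proof
    show "rel H `` {a} \<subseteq> m" unfolding rel_def using mx by auto
    show "m \<subseteq> rel H `` {a}" unfolding rel_def using m(1) by auto
  qed
  show "rel H `` {a} \<in> H" "a \<in> rel H `` {a}" using eq m(1) by auto
  show "\<And>C. C \<in> H \<Longrightarrow> a \<in> C \<Longrightarrow> C \<subseteq> rel H `` {a}" using eq mx by simp
qed

lemma rel_trans: "(a,b) \<in> rel H \<Longrightarrow> (b,c) \<in> rel H \<Longrightarrow> (a,c) \<in> rel H"
proof -
  assume "(a,b) \<in> rel H" "(b,c) \<in> rel H"
  then obtain C1 C2 where C: "C1 \<in> H" "a \<in> C1" "b \<in> C1" "C2 \<in> H" "b \<in> C2" "c \<in> C2"
    unfolding rel_def by auto
  have "C1 \<subseteq> C2 \<or> C2 \<subseteq> C1" using lam_cmp[OF forest_lam[OF fH] C(1) C(4) C(3) C(5)] .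
  then show "(a,c) \<in> rel H" unfolding rel_def using C by auto
qed

lemma H_R: "H = {rel H `` {a} \<inter> D | a D. a \<in> I \<and> D \<in> T \<and> a \<in> D}"
proof
  show "H \<subseteq> {rel H `` {a} \<inter> D | a D. a \<in> I \<and> D \<in> T \<and> a \<in> D}"
  proof
    fix C assume CH: "C \<in> H"
    obtain a where a: "a \<in> C" using forest_ne[OF fH CH] by auto
    have aI: "a \<in> I" using forest_sub[OF fH CH] a by auto
    have "C \<subseteq> rel H `` {a}" using blk(3)[OF aI CH a] .
    then have "rel H `` {a} \<inter> lt C = C" using part1[OF blk(1)[OF aI] CH] by simp
    moreover have "lt C \<in> T" "a \<in> lt C" using H_ltI[OF CH] a by auto
    ultimately show "C \<in> {rel H `` {a} \<inter> D | a D. a \<in> I \<and> D \<in> T \<and> a \<in> D}" 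
      using aI by (intro CollectI exI[of _ a] exI[of _ "lt C"]) simp
  qed
  show "{rel H `` {a} \<inter> D | a D. a \<in> I \<and> D \<in> T \<and> a \<in> D} \<subseteq> H"
  proof
    fix X assume "X \<in> {rel H `` {a} \<inter> D | a D. a \<in> I \<and> D \<in> T \<and> a \<in> D}"
    then obtain a D where X: "X = rel H `` {a} \<inter> D" "a \<in> I" "D \<in> T" "a \<in> D" by blast
    show "X \<in> H" using part2[OF blk(1)[OF X(2)] X(3) blk(2)[OF X(2)] X(4)] X(1) by simp
  qed
qed

lemma rel_compat:
  assumes ab: "(a,b) \<in> rel H" and cd: "(c,d) \<in> rel H" and ne: "a \<noteq> b" "c \<noteq> d" and eq: "lt {a,b} = lt {c,d}"
  shows "(a,c) \<in> rel H"
proof -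
  have I: "a \<in> I" "b \<in> I" "c \<in> I" "d \<in> I" using rel_I[OF ab] rel_I[OF cd] by auto
  define w where "w = lt {a,b}"
  note W1 = lt2[OF I(1,2)] and W2 = lt2[OF I(3,4)]
  let ?C1 = "rel H `` {a} \<inter> w" and ?C2 = "rel H `` {c} \<inter> w"
  have C1: "?C1 \<in> H" using part2[OF blk(1)[OF I(1)] W1(1) blk(2)[OF I(1)]] W1(2) w_def by simp
  have C2: "?C2 \<in> H" using part2[OF blk(1)[OF I(3)] W2(1) blk(2)[OF I(3)]] W2(2) w_def eq by simp
  have in1: "a \<in> ?C1" "b \<in> ?C1" using ab blk(2)[OF I(1)] W1 w_def by auto
  have in2: "c \<in> ?C2" "d \<in> ?C2" using cd blk(2)[OF I(3)] W2 w_def eq by auto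
  have l1: "lt ?C1 = w"
    by (rule lt_eq[where p=a and q=b]) (use in1 W1(1) w_def forest_sub[OF fH C1] in simp_all)
  have l2: "lt ?C2 = w"
    by (rule lt_eq[where p=c and q=d]) (use in2 W1(1) w_def eq forest_sub[OF fH C2] in simp_all)
  have i1: "?C1 \<in> inner H" using inner_two[OF C1 in1 ne(1)] .
  have i2: "?C2 \<in> inner H" using inner_two[OF C2 in2 ne(2)] .
  have "lt ?C1 = lt ?C2" using l1 l2 by simp
  then have "?C1 = ?C2" using inj_onD[OF inj _ i1 i2] by simp
  then have "c \<in> rel H `` {a}" using in2 by auto
  then show ?thesis by simp
qed

end
end


context tr
begin

definition Rf :: "('a \<times> 'a) set \<Rightarrow> 'a set set" where
  "Rf E = {E `` {a} \<inter> D | a D. a \<in> I \<and> D \<in> T \<and> a \<in> D}"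

definition equivI :: "('a \<times> 'a) set \<Rightarrow> bool" where
  "equivI E \<longleftrightarrow> E \<subseteq> I \<times> I \<and> (\<forall>a\<in>I. (a,a) \<in> E) \<and> (\<forall>a b. (a,b) \<in> E \<longrightarrow> (b,a) \<in> E) \<and>
     (\<forall>a b c. (a,b) \<in> E \<longrightarrow> (b,c) \<in> E \<longrightarrow> (a,c) \<in> E)"

definition compat :: "('a \<times> 'a) set \<Rightarrow> bool" where
  "compat E \<longleftrightarrow> (\<forall>a b c d. (a,b) \<in> E \<longrightarrow> (c,d) \<in> E \<longrightarrow> a \<noteq> b \<longrightarrow> c \<noteq> d \<longrightarrow> lt {a,b} = lt {c,d} \<longrightarrow> (a,c) \<in> E)"

definition good where "good E \<longleftrightarrow> equivI E \<and> compat E"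

definition SE :: "('a \<times> 'a) set \<Rightarrow> 'a set set" where
  "SE E = {lt {a,b} | a b. (a,b) \<in> E \<and> a \<noteq> b}"

lemma eqvD:
  assumes "equivI E"
  shows "E \<subseteq> I \<times> I" "a \<in> I \<Longrightarrow> (a,a) \<in> E" "(a,b) \<in> E \<Longrightarrow> (b,a) \<in> E"
    "(a,b) \<in> E \<Longrightarrow> (b,c) \<in> E \<Longrightarrow> (a,c) \<in> E"
  using assms unfolding equivI_def by blast+

lemma eqvI2: "(a,b) \<in> E \<Longrightarrow> equivI E \<Longrightarrow> a \<in> I \<and> b \<in> I"
  using eqvD(1) by blast

lemma eqv_blk:
  assumes "equivI E" "x \<in> E `` {a}"
  shows "E `` {x} = E `` {a}"
proof
  show "E `` {x} \<subseteq> E `` {a}" using assms eqvD(4)[OF assms(1), of a x] by auto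
  show "E `` {a} \<subseteq> E `` {x}" using assms eqvD(3,4)[OF assms(1)] by blast
qed

lemma compatD: "compat E \<Longrightarrow> (a,b) \<in> E \<Longrightarrow> (c,d) \<in> E \<Longrightarrow> a \<noteq> b \<Longrightarrow> c \<noteq> d \<Longrightarrow> lt {a,b} = lt {c,d} \<Longrightarrow> (a,c) \<in> E"
  unfolding compat_def by blast

lemma P_good:
  assumes "H \<in> P"
  shows "good (rel H)" "H = Rf (rel H)"
proof -
  have fH: "is_forest I H" and inj: "inj_on lt (inner H)" using assms P_iff by auto
  have "equivI (rel H)" unfolding equivI_def
  proof (intro conjI allI impI ballI)
    show "rel H \<subseteq> I \<times> I" using rel_I[OF fH inj] by auto
    show "(a,a) \<in> rel H" if "a \<in> I" for a using forest_sing[OF fH that] unfolding rel_def by auto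
    show "(b,a) \<in> rel H" if "(a,b) \<in> rel H" for a b using that unfolding rel_def by auto
    show "(a,c) \<in> rel H" if "(a,b) \<in> rel H" "(b,c) \<in> rel H" for a b c using rel_trans[OF fH inj that] .
  qed
  moreover have "compat (rel H)" unfolding compat_def using rel_compat[OF fH inj] by blast
  ultimately show "good (rel H)" unfolding good_def by simp
  show "H = Rf (rel H)" unfolding Rf_def using H_R[OF fH inj] .
qed

lemma split_lt:
  assumes X: "X \<subseteq> I" "p \<in> X" "q \<in> X" "p \<noteq> q"
  shows "\<exists>L R. children T (lt X) L R \<and> X \<inter> L \<noteq> {} \<and> X \<inter> R \<noteq> {}"
proof -
  have ne: "X \<noteq> {}" using X by auto
  note L = lt[OF ne X(1)]
  have "lt X \<in> inner T" using inner_two[OF L(1), of p q] L(2) X by auto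
  then obtain A B where ch: "children T (lt X) A B" using forest_ch[OF Tf] by blast
  note c = children_props[OF ch]
  have side: "X \<inter> A' \<noteq> {}" if ch': "children T (lt X) A' B'" for A' B'
  proof
    assume e: "X \<inter> A' = {}"
    note c' = children_props[OF ch']
    have "X \<subseteq> B'" using e c'(6) L(2) by auto
    then have "lt X \<subseteq> B'" using L(3) c'(2) by simp
    then show False using c'(3,5,6) by auto
  qed
  show ?thesis using ch side[OF ch] side[OF children_sym[OF ch]] by blast
qed

lemma split_pair:
  assumes X: "X \<subseteq> I" "p \<in> X" "q \<in> X" "p \<noteq> q"
  shows "\<exists>p' q'. p' \<in> X \<and> q' \<in> X \<and> p' \<noteq> q' \<and> lt {p',q'} = lt X"
proof -
  obtain L R where ch: "children T (lt X) L R" and ne: "X \<inter> L \<noteq> {}" "X \<inter> R \<noteq> {}"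
    using split_lt[OF X] by blast
  obtain p' q' where pq: "p' \<in> X \<inter> L" "q' \<in> X \<inter> R" using ne by blast
  have wT: "lt X \<in> T" using lt(1)[of X] X by auto
  have "lt {p',q'} = lt X" using side_diff[OF wT ch] pq by simp
  moreover have "p' \<noteq> q'" using pq children_props(5)[OF ch] by auto
  ultimately show ?thesis using pq by blast
qed

lemma Rf_form:
  assumes E: "equivI E" and C: "C \<in> Rf E" and a: "a \<in> C"
  shows "C = E `` {a} \<inter> lt C" "C \<subseteq> I" "lt C \<in> T" "C \<subseteq> lt C"
proof -
  obtain b D where bD: "C = E `` {b} \<inter> D" "b \<in> I" "D \<in> T" "b \<in> D" using C unfolding Rf_def by blast
  have CI: "C \<subseteq> I" using bD eqvD(1)[OF E] by auto
  have ne: "C \<noteq> {}" using a by auto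
  note L = lt[OF ne CI]
  have blk: "E `` {a} = E `` {b}" using eqv_blk[OF E] a bD(1) by auto
  have "lt C \<subseteq> D" using L(3)[OF bD(3)] bD(1) by auto
  then show "C = E `` {a} \<inter> lt C" using L(2) bD(1) blk by auto
  show "C \<subseteq> I" "lt C \<in> T" "C \<subseteq> lt C" using CI L by auto
qed

lemma Rf_forest:
  assumes E: "equivI E"
  shows "is_forest I (Rf E)"
proof -
  have h1: "\<forall>C\<in>Rf E. C \<noteq> {} \<and> C \<subseteq> I"
  proof
    fix C assume C: "C \<in> Rf E"
    then obtain b D where bD: "C = E `` {b} \<inter> D" "b \<in> I" "D \<in> T" "b \<in> D" unfolding Rf_def by blast
    have "b \<in> C" using bD eqvD(2)[OF E] by auto
    then show "C \<noteq> {} \<and> C \<subseteq> I" using Rf_form(2)[OF E C] by auto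
  qed
  have h2: "\<forall>i\<in>I. {i} \<in> Rf E"
  proof
    fix i assume i: "i \<in> I"
    have "{i} \<in> T" using forest_sing[OF Tf i] .
    moreover have "E `` {i} \<inter> {i} = {i}" using eqvD(2)[OF E i] by auto
    ultimately show "{i} \<in> Rf E" unfolding Rf_def using i by force
  qed
  have h3: "\<forall>A\<in>Rf E. \<forall>B\<in>Rf E. A \<subseteq> B \<or> B \<subseteq> A \<or> A \<inter> B = {}"
  proof (intro ballI)
    fix A B assume A: "A \<in> Rf E" and B: "B \<in> Rf E"
    show "A \<subseteq> B \<or> B \<subseteq> A \<or> A \<inter> B = {}"
    proof (cases "A \<inter> B = {}")
      case False
      then obtain x where x: "x \<in> A" "x \<in> B" by blast
      have fA: "A = E `` {x} \<inter> lt A" "lt A \<in> T" using Rf_form[OF E A x(1)] by auto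
      have fB: "B = E `` {x} \<inter> lt B" "lt B \<in> T" using Rf_form[OF E B x(2)] by auto
      have "x \<in> lt A" "x \<in> lt B" using Rf_form(4)[OF E A x(1)] Rf_form(4)[OF E B x(2)] x by auto
      then have "lt A \<subseteq> lt B \<or> lt B \<subseteq> lt A" using T_cmp[OF fA(2) fB(2)] by simp
      then show ?thesis using fA(1) fB(1) by auto
    qed simp
  qed
  have h4: "\<forall>C\<in>inner (Rf E). \<exists>A B. children (Rf E) C A B"
  proof
    fix C assume Ci: "C \<in> inner (Rf E)"
    then have C: "C \<in> Rf E" and ns: "\<not> (\<exists>i. C = {i})" unfolding inner_def by auto
    then obtain b D where bD: "C = E `` {b} \<inter> D" "b \<in> I" "D \<in> T" "b \<in> D" unfolding Rf_def by blast
    have bC: "b \<in> C" using bD eqvD(2)[OF E] by auto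
    then obtain c where c: "c \<in> C" "c \<noteq> b" using ns by blast
    note F = Rf_form[OF E C bC]
    obtain L R where ch: "children T (lt C) L R" and ne: "C \<inter> L \<noteq> {}" "C \<inter> R \<noteq> {}"
      using split_lt[OF F(2) bC c(1)] c(2) by metis
    note cp = children_props[OF ch]
    obtain p q where pq: "p \<in> C \<inter> L" "q \<in> C \<inter> R" using ne by blast
    have pI: "p \<in> I" "q \<in> I" using pq F(2) by auto
    have bp: "E `` {p} = E `` {b}" "E `` {q} = E `` {b}" using eqv_blk[OF E] pq F(1) by auto
    have A: "E `` {b} \<inter> L \<in> Rf E" unfolding Rf_def using pI(1) cp(1) pq(1) bp(1)
      by (intro CollectI exI[of _ p] exI[of _ L]) auto
    have B: "E `` {b} \<inter> R \<in> Rf E" unfolding Rf_def using pI(2) cp(2) pq(2) bp(2)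
      by (intro CollectI exI[of _ q] exI[of _ R]) auto
    have "children (Rf E) C (E `` {b} \<inter> L) (E `` {b} \<inter> R)"
      unfolding children_def using A B pq bp F(1) cp(5,6) by auto
    then show "\<exists>A B. children (Rf E) C A B" by blast
  qed
  show ?thesis unfolding is_forest_def by (intro conjI h1 h2 h3 h4)
qed

lemma Rf_rel:
  assumes E: "equivI E"
  shows "rel (Rf E) = E"
proof
  show "rel (Rf E) \<subseteq> E"
  proof (rule subrelI)
    fix a b assume "(a,b) \<in> rel (Rf E)"
    then have "\<exists>C\<in>Rf E. a \<in> C \<and> b \<in> C" unfolding rel_def by simp
    then obtain C where x: "C \<in> Rf E" "a \<in> C" "b \<in> C" by (elim bexE conjE)
    have "C = E `` {a} \<inter> lt C" using Rf_form(1)[OF E x(1,2)] .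
    then show "(a,b) \<in> E" using x(3) by auto
  qed
  show "E \<subseteq> rel (Rf E)"
  proof (rule subrelI)
    fix a b assume x: "(a,b) \<in> E"
    have aI: "a \<in> I" "b \<in> I" using eqvI2[OF x E] by auto
    have M: "E `` {a} \<inter> I \<in> Rf E" unfolding Rf_def using aI IT
      by (intro CollectI exI[of _ a] exI[of _ I]) simp
    have A1: "a \<in> E `` {a} \<inter> I" using aI eqvD(2)[OF E aI(1)] by simp
    have A2: "b \<in> E `` {a} \<inter> I" using aI x by simp
    have "\<exists>C\<in>Rf E. a \<in> C \<and> b \<in> C"
    proof (rule bexI[of _ "E `` {a} \<inter> I"])
      show "a \<in> E `` {a} \<inter> I \<and> b \<in> E `` {a} \<inter> I" using A1 A2 by (rule conjI)
    qed (rule M)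
    then show "(a,b) \<in> rel (Rf E)" unfolding rel_def by simp
  qed
qed

lemma Rf_inj:
  assumes G: "good E"
  shows "inj_on lt (inner (Rf E))"
proof (rule inj_onI)
  have E: "equivI E" and cp: "compat E" using G unfolding good_def by auto
  fix C1 C2 assume C1i: "C1 \<in> inner (Rf E)" and C2i: "C2 \<in> inner (Rf E)" and eq: "lt C1 = lt C2"
  have pairs: "\<exists>p q. p \<in> C \<and> q \<in> C \<and> p \<noteq> q \<and> lt {p,q} = lt C" if Ci: "C \<in> inner (Rf E)" for C
  proof -
    have C: "C \<in> Rf E" and ns: "\<not> (\<exists>i. C = {i})" using Ci unfolding inner_def by auto
    obtain b where b: "b \<in> C" using forest_ne[OF Rf_forest[OF E] C] by auto
    then obtain c where c: "c \<in> C" "c \<noteq> b" using ns by blast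
    show ?thesis using split_pair[OF Rf_form(2)[OF E C b] b c(1)] c(2) by metis
  qed
  obtain p1 q1 where 1: "p1 \<in> C1" "q1 \<in> C1" "p1 \<noteq> q1" "lt {p1,q1} = lt C1" using pairs[OF C1i] by blast
  obtain p2 q2 where 2: "p2 \<in> C2" "q2 \<in> C2" "p2 \<noteq> q2" "lt {p2,q2} = lt C2" using pairs[OF C2i] by blast
  have C1: "C1 \<in> Rf E" and C2: "C2 \<in> Rf E" using C1i C2i unfolding inner_def by auto
  have f1: "C1 = E `` {p1} \<inter> lt C1" using Rf_form(1)[OF E C1 1(1)] .
  have f2: "C2 = E `` {p2} \<inter> lt C2" using Rf_form(1)[OF E C2 2(1)] .
  have r1: "(p1,q1) \<in> E" using f1 1(2) by auto
  have r2: "(p2,q2) \<in> E" using f2 2(2) by auto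
  have "(p1,p2) \<in> E" using compatD[OF cp r1 r2 1(3) 2(3)] 1(4) 2(4) eq by simp
  then have "E `` {p2} = E `` {p1}" using eqv_blk[OF E] by simp
  then show "C1 = C2" using f1 f2 eq by simp
qed

lemma Rf_P: "good E \<Longrightarrow> Rf E \<in> P"
  using P_iff Rf_forest Rf_inj good_def by auto

end


context tr
begin

lemma SE_mono: "E \<subseteq> E' \<Longrightarrow> SE E \<subseteq> SE E'"
  unfolding SE_def by blast

lemma SE_T: "equivI E \<Longrightarrow> SE E \<subseteq> T"
proof
  fix w assume E: "equivI E" and "w \<in> SE E"
  then obtain a b where "w = lt {a,b}" "(a,b) \<in> E" unfolding SE_def by blast
  then show "w \<in> T" using lt2(1) eqvI2[OF _ E] by auto
qed

lemma SE_I: "(a,b) \<in> E \<Longrightarrow> a \<noteq> b \<Longrightarrow> lt {a,b} \<in> SE E"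
  unfolding SE_def by blast

lemma SE_E: "w \<in> SE E \<Longrightarrow> \<exists>a b. (a,b) \<in> E \<and> a \<noteq> b \<and> w = lt {a,b}"
  unfolding SE_def by blast

lemma T_fin: "D \<in> T \<Longrightarrow> finite D"
  using forest_sub[OF Tf] finI by (meson rev_finite_subset)

lemma lemK:
  assumes g: "good E" and g': "good E'" and sub: "E \<subseteq> E'"
  shows "(c,d) \<in> E' \<Longrightarrow> (\<forall>w\<in>SE E'. w \<subseteq> lt {c,d} \<longrightarrow> w \<in> SE E) \<Longrightarrow> (c,d) \<in> E"
proof (induction "card (lt {c,d})" arbitrary: c d rule: less_induct)
  case less
  have E: "equivI E" and E': "equivI E'" and cp': "compat E'" using g g' unfolding good_def by auto
  have cd: "c \<in> I" "d \<in> I" using eqvI2[OF less.prems(1) E'] by auto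
  show ?case
  proof (cases "c = d")
    case True
    then show ?thesis using eqvD(2)[OF E cd(1)] by simp
  next
    case False
    define w where "w = lt {c,d}"
    have "w \<in> SE E'" using SE_I[OF less.prems(1) False] w_def by simp
    then have "w \<in> SE E" using less.prems(2) w_def by simp
    then obtain e f where ef: "(e,f) \<in> E" "e \<noteq> f" "w = lt {e,f}" using SE_E by blast
    have ef': "(e,f) \<in> E'" using ef(1) sub by auto
    have efI: "e \<in> I" "f \<in> I" using eqvI2[OF ef(1) E] by auto
    have ce: "(c,e) \<in> E'" using compatD[OF cp' less.prems(1) ef' False ef(2)] ef(3) w_def by simp
    have wfin: "finite w" using T_fin lt2(1)[OF cd] w_def by simp
    have IH: "(p,q) \<in> E" if pq: "(p,q) \<in> E'" "lt {p,q} \<subset> w" for p q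
    proof -
      have "card (lt {p,q}) < card (lt {c,d})" using psubset_card_mono[OF wfin pq(2)] w_def by simp
      moreover have "\<forall>w'\<in>SE E'. w' \<subseteq> lt {p,q} \<longrightarrow> w' \<in> SE E" using less.prems(2) pq(2) w_def by auto
      ultimately show ?thesis using less.hyps pq(1) by blast
    qed
    have fp: "(lt {c,e} \<subset> w \<and> lt {d,f} \<subset> w) \<or> (lt {c,f} \<subset> w \<and> lt {d,e} \<subset> w)"
      using four_point[OF cd efI False ef(2)] ef(3) w_def by simp
    then show ?thesis
    proof
      assume h: "lt {c,e} \<subset> w \<and> lt {d,f} \<subset> w"
      have 1: "(c,e) \<in> E" using IH[OF ce] h by simp
      have "(d,f) \<in> E'" using eqvD(3,4)[OF E'] less.prems(1) ce ef' by blast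
      then have 2: "(d,f) \<in> E" using IH h by simp
      show ?thesis using eqvD(3,4)[OF E] 1 2 ef(1) by blast
    next
      assume h: "lt {c,f} \<subset> w \<and> lt {d,e} \<subset> w"
      have "(c,f) \<in> E'" using eqvD(4)[OF E'] ce ef' by blast
      then have 1: "(c,f) \<in> E" using IH h by simp
      have "(d,e) \<in> E'" using eqvD(3,4)[OF E'] less.prems(1) ce by blast
      then have 2: "(d,e) \<in> E" using IH h by simp
      show ?thesis using eqvD(3,4)[OF E] 1 2 ef(1) by blast
    qed
  qed
qed

lemma F0:
  assumes g: "good Rx" and I: "a \<in> I" "b \<in> I" "c \<in> I" "d \<in> I" and ne: "a \<noteq> b" and nab: "(a,b) \<notin> Rx"
    and ac: "(a,c) \<in> Rx" and bd: "(b,d) \<in> Rx" and cv: "c \<notin> lt {a,b}"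
  shows "\<exists>e f. (e,f) \<in> Rx \<and> e \<noteq> f \<and> e \<in> Rx `` {a} \<union> Rx `` {b} \<and> lt {c,d} = lt {e,f}"
proof -
  have E: "equivI Rx" and cp: "compat Rx" using g unfolding good_def by auto
  define v where "v = lt {a,b}"
  define \<alpha> where "\<alpha> = lt {a,c}"
  define \<beta> where "\<beta> = lt {b,d}"
  note V = lt2[OF I(1,2)] and A = lt2[OF I(1,3)] and B = lt2[OF I(2,4)]
  have ac_ne: "a \<noteq> c" using V(2) cv by auto
  have "v \<subseteq> \<alpha> \<or> \<alpha> \<subseteq> v" using T_cmp[OF V(1) A(1) V(2) A(2)] v_def \<alpha>_def by simp
  moreover have "\<not> \<alpha> \<subseteq> v" using A(3) cv v_def \<alpha>_def by auto
  ultimately have "v \<subseteq> \<alpha>" by simp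
  then have va: "v \<subset> \<alpha>" using A(3) cv v_def \<alpha>_def by auto
  have bc: "lt {b,c} = \<alpha>" using ultra[OF I(2,1,3)] va v_def \<alpha>_def lt_comm[of a b] by simp
  have bA: "b \<in> lt {a,c}" using va V(3) v_def \<alpha>_def by auto
  have aA: "a \<in> \<alpha>" using A(2) \<alpha>_def by simp
  have "\<alpha> \<subseteq> \<beta> \<or> \<beta> \<subseteq> \<alpha>" using T_cmp[OF A(1) B(1) bA B(2)] \<alpha>_def \<beta>_def by simp
  moreover have bdne: "b \<noteq> d" if "\<alpha> \<subseteq> \<beta>"
  proof
    assume "b = d"
    then have "\<beta> = {b}" using lt_sing[OF I(2)] \<beta>_def by simp
    then show False using that aA ne by auto
  qed
  ultimately consider (lt) "\<alpha> \<subset> \<beta>" | (gt) "\<beta> \<subset> \<alpha>" | (eq) "\<alpha> = \<beta>" by blast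
  then show ?thesis
  proof cases
    case lt
    have "lt {c,d} = \<beta>" using ultra[OF I(3,2,4)] lt bc lt_comm[of b c] \<beta>_def by simp
    moreover have "b \<in> Rx `` {a} \<union> Rx `` {b}" using eqvD(2)[OF E I(2)] by simp
    ultimately show ?thesis using bd bdne lt \<beta>_def by blast
  next
    case gt
    have "lt {d,c} = \<alpha>" using ultra[OF I(4,2,3)] gt bc lt_comm[of d b] \<beta>_def by simp
    then have "lt {c,d} = lt {a,c}" using lt_comm[of c d] \<alpha>_def by simp
    moreover have "a \<in> Rx `` {a} \<union> Rx `` {b}" using eqvD(2)[OF E I(1)] by simp
    ultimately show ?thesis using ac ac_ne by blast
  next
    case eq
    then have "b \<noteq> d" using bdne by simp
    then have "(a,b) \<in> Rx" using compatD[OF cp ac bd ac_ne] eq \<alpha>_def \<beta>_def by simp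
    then show ?thesis using nab by simp
  qed
qed

context
  fixes Rx Ry :: "('a \<times> 'a) set" and a b :: 'a
  assumes gx: "good Rx" and gy: "good Ry" and sub: "Rx \<subseteq> Ry" and ab: "(a,b) \<in> Ry" and ne: "a \<noteq> b"
    and vx: "lt {a,b} \<notin> SE Rx" and minv: "\<forall>w\<in>SE Ry. w \<subset> lt {a,b} \<longrightarrow> w \<in> SE Rx"
begin

definition Ux where "Ux = Rx `` {a} \<union> Rx `` {b}"
definition Mx where "Mx = Rx \<union> Ux \<times> Ux"

lemma Ex_eqv: "equivI Rx" "compat Rx" "equivI Ry" "compat Ry"
  using gx gy unfolding good_def by auto

lemma abI: "a \<in> I" "b \<in> I" using eqvI2[OF ab Ex_eqv(3)] by auto

lemma nab: "(a,b) \<notin> Rx" using SE_I[of a b Rx] ne vx by auto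

lemma claim: "(c,d) \<in> Ry \<Longrightarrow> lt {c,d} \<subset> lt {a,b} \<Longrightarrow> (c,d) \<in> Rx"
proof -
  assume cd: "(c,d) \<in> Ry" and l: "lt {c,d} \<subset> lt {a,b}"
  have "\<forall>w\<in>SE Ry. w \<subseteq> lt {c,d} \<longrightarrow> w \<in> SE Rx"
  proof (intro ballI impI)
    fix w assume "w \<in> SE Ry" "w \<subseteq> lt {c,d}"
    then show "w \<in> SE Rx" using minv l by auto
  qed
  then show ?thesis using lemK[OF gx gy sub cd] by simp
qed

lemma U_I: "Ux \<subseteq> I" unfolding Ux_def using eqvD(1)[OF Ex_eqv(1)] by auto

lemma U_cl: "u \<in> Ux \<Longrightarrow> (u,z) \<in> Rx \<Longrightarrow> z \<in> Ux"
  unfolding Ux_def using eqvD(4)[OF Ex_eqv(1)] by blast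

lemma inU: "a \<in> Ux" "b \<in> Ux" unfolding Ux_def using eqvD(2)[OF Ex_eqv(1)] abI by auto

lemma U_Ry: "u \<in> Ux \<Longrightarrow> (a,u) \<in> Ry"
proof -
  assume "u \<in> Ux"
  then have "(a,u) \<in> Rx \<or> (b,u) \<in> Rx" unfolding Ux_def by auto
  then show "(a,u) \<in> Ry" using sub ab eqvD(4)[OF Ex_eqv(3)] by blast
qed

lemma M_eqv: "equivI Mx"
  unfolding equivI_def
proof (intro conjI allI impI ballI)
  show "Mx \<subseteq> I \<times> I" unfolding Mx_def using eqvD(1)[OF Ex_eqv(1)] U_I by auto
  show "(x,x) \<in> Mx" if "x \<in> I" for x unfolding Mx_def using eqvD(2)[OF Ex_eqv(1) that] by simp
  show "(y,x) \<in> Mx" if "(x,y) \<in> Mx" for x y using that eqvD(3)[OF Ex_eqv(1)] unfolding Mx_def by auto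
  show "(x,z) \<in> Mx" if "(x,y) \<in> Mx" "(y,z) \<in> Mx" for x y z
  proof -
    have s: "(p,q) \<in> Rx \<Longrightarrow> (q,p) \<in> Rx" for p q using eqvD(3)[OF Ex_eqv(1)] by simp
    have t: "(p,q) \<in> Rx \<Longrightarrow> (q,r) \<in> Rx \<Longrightarrow> (p,r) \<in> Rx" for p q r using eqvD(4)[OF Ex_eqv(1)] by simp
    show ?thesis using that s t U_cl unfolding Mx_def by blast
  qed
qed

lemma M_sub: "Mx \<subseteq> Ry"
proof
  fix x assume "x \<in> Mx"
  then consider "x \<in> Rx" | "x \<in> Ux \<times> Ux" unfolding Mx_def by auto
  then show "x \<in> Ry"
  proof cases
    case 1 then show ?thesis using sub by auto
  next
    case 2
    then obtain p q where pq: "x = (p,q)" "p \<in> Ux" "q \<in> Ux" by auto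
    have "(a,p) \<in> Ry" "(a,q) \<in> Ry" using U_Ry pq by auto
    then show ?thesis using pq(1) eqvD(3,4)[OF Ex_eqv(3)] by blast
  qed
qed

lemma Fab:
  assumes c: "c \<in> Rx `` {a}" and d: "d \<in> Rx `` {b}" and cd: "c \<noteq> d"
  shows "lt {c,d} = lt {a,b} \<or> (\<exists>e f. (e,f) \<in> Rx \<and> e \<noteq> f \<and> e \<in> Ux \<and> lt {c,d} = lt {e,f})"
proof -
  have ac: "(a,c) \<in> Rx" and bd: "(b,d) \<in> Rx" using c d by auto
  have cI: "c \<in> I" and dI: "d \<in> I" using eqvI2[OF ac Ex_eqv(1)] eqvI2[OF bd Ex_eqv(1)] by auto
  note V = lt2[OF abI]
  consider (inv) "c \<in> lt {a,b} \<and> d \<in> lt {a,b}" | (c_out) "c \<notin> lt {a,b}" | (d_out) "d \<notin> lt {a,b}" by blast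
  then show ?thesis
  proof cases
    case inv
    have le: "lt {c,d} \<subseteq> lt {a,b}" using V(4)[OF V(1)] inv lt2(4)[OF cI dI V(1)] by simp
    show ?thesis
    proof (cases "lt {c,d} = lt {a,b}")
      case False
      then have ps: "lt {c,d} \<subset> lt {a,b}" using le by auto
      have "(c,a) \<in> Ry" "(b,d) \<in> Ry" using ac bd sub eqvD(3)[OF Ex_eqv(1)] by auto
      then have "(c,d) \<in> Ry" using ab eqvD(4)[OF Ex_eqv(3)] by blast
      then have "(c,d) \<in> Rx" using claim ps by simp
      then have "(a,b) \<in> Rx" using ac bd eqvD(3,4)[OF Ex_eqv(1)] by blast
      then show ?thesis using nab by simp
    qed simp
  next
    case c_out
    have "\<exists>e f. (e,f) \<in> Rx \<and> e \<noteq> f \<and> e \<in> Rx `` {a} \<union> Rx `` {b} \<and> lt {c,d} = lt {e,f}"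
      using F0[OF gx abI cI dI ne nab ac bd c_out] .
    then show ?thesis unfolding Ux_def by blast
  next
    case d_out
    have nba: "(b,a) \<notin> Rx" using nab eqvD(3)[OF Ex_eqv(1)] by blast
    have "d \<notin> lt {b,a}" using d_out lt_comm[of a b] by simp
    then have "\<exists>e f. (e,f) \<in> Rx \<and> e \<noteq> f \<and> e \<in> Rx `` {b} \<union> Rx `` {a} \<and> lt {d,c} = lt {e,f}"
      using F0[OF gx abI(2,1) dI cI ne[symmetric] nba bd ac] by simp
    then show ?thesis unfolding Ux_def using lt_comm[of c d] by auto
  qed
qed

lemma F:
  assumes c: "c \<in> Ux" and d: "d \<in> Ux" and cd: "c \<noteq> d"
  shows "lt {c,d} = lt {a,b} \<or> (\<exists>e f. (e,f) \<in> Rx \<and> e \<noteq> f \<and> e \<in> Ux \<and> lt {c,d} = lt {e,f})"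
proof (cases "(c,d) \<in> Rx")
  case True
  then show ?thesis using c cd by blast
next
  case False
  have s: "(p,q) \<in> Rx \<Longrightarrow> (q,p) \<in> Rx" for p q using eqvD(3)[OF Ex_eqv(1)] by simp
  have t: "(p,q) \<in> Rx \<Longrightarrow> (q,r) \<in> Rx \<Longrightarrow> (p,r) \<in> Rx" for p q r using eqvD(4)[OF Ex_eqv(1)] by simp
  have "(c \<in> Rx `` {a} \<and> d \<in> Rx `` {b}) \<or> (d \<in> Rx `` {a} \<and> c \<in> Rx `` {b})"
    using c d False s t unfolding Ux_def by blast
  then show ?thesis
  proof
    assume "c \<in> Rx `` {a} \<and> d \<in> Rx `` {b}"
    then show ?thesis using Fab cd by blast
  next
    assume "d \<in> Rx `` {a} \<and> c \<in> Rx `` {b}"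
    then have "lt {d,c} = lt {a,b} \<or> (\<exists>e f. (e,f) \<in> Rx \<and> e \<noteq> f \<and> e \<in> Ux \<and> lt {d,c} = lt {e,f})"
      using Fab cd by blast
    then show ?thesis using lt_comm[of c d] by simp
  qed
qed

lemma mixed:
  assumes pq: "(p,q) \<in> Mx" and pU: "p \<in> Ux" and rs: "(r,s) \<in> Mx" and rU: "r \<notin> Ux"
    and ne1: "p \<noteq> q" and ne2: "r \<noteq> s" and eq: "lt {p,q} = lt {r,s}"
  shows False
proof -
  have qU: "q \<in> Ux" using pq pU U_cl unfolding Mx_def by auto
  have rsx: "(r,s) \<in> Rx" using rs rU unfolding Mx_def by auto
  have "lt {p,q} = lt {a,b} \<or> (\<exists>e f. (e,f) \<in> Rx \<and> e \<noteq> f \<and> e \<in> Ux \<and> lt {p,q} = lt {e,f})"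
    using F[OF pU qU ne1] .
  then show False
  proof
    assume "lt {p,q} = lt {a,b}"
    then have "lt {a,b} \<in> SE Rx" using SE_I[OF rsx ne2] eq by simp
    then show False using vx by simp
  next
    assume "\<exists>e f. (e,f) \<in> Rx \<and> e \<noteq> f \<and> e \<in> Ux \<and> lt {p,q} = lt {e,f}"
    then obtain e f where ef: "(e,f) \<in> Rx" "e \<noteq> f" "e \<in> Ux" "lt {p,q} = lt {e,f}" by blast
    have "(e,r) \<in> Rx" using compatD[OF Ex_eqv(2) ef(1) rsx ef(2) ne2] ef(4) eq by simp
    then show False using U_cl[OF ef(3)] rU by blast
  qed
qed

lemma M_compat: "compat Mx"
  unfolding compat_def
proof (intro allI impI)
  fix p q r s assume pq: "(p,q) \<in> Mx" and rs: "(r,s) \<in> Mx" and ne1: "p \<noteq> q" and ne2: "r \<noteq> s"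
    and eq: "lt {p,q} = lt {r,s}"
  show "(p,r) \<in> Mx"
  proof (cases "p \<in> Ux")
    case True
    show ?thesis
    proof (cases "r \<in> Ux")
      case True
      then show ?thesis using \<open>p \<in> Ux\<close> unfolding Mx_def by simp
    next
      case False
      then show ?thesis using mixed[OF pq \<open>p \<in> Ux\<close> rs False ne1 ne2 eq] by simp
    qed
  next
    case False
    show ?thesis
    proof (cases "r \<in> Ux")
      case True
      then show ?thesis using mixed[OF rs True pq False ne2 ne1 eq[symmetric]] by simp
    next
      case rF: False
      have "(p,q) \<in> Rx" "(r,s) \<in> Rx" using pq rs False rF unfolding Mx_def by auto
      then have "(p,r) \<in> Rx" using compatD[OF Ex_eqv(2) _ _ ne1 ne2 eq] by simp
      then show ?thesis unfolding Mx_def by simp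
    qed
  qed
qed

lemma M_good: "good Mx" using M_eqv M_compat unfolding good_def by simp

lemma SE_M: "SE Mx = insert (lt {a,b}) (SE Rx)"
proof
  show "SE Mx \<subseteq> insert (lt {a,b}) (SE Rx)"
  proof
    fix w assume "w \<in> SE Mx"
    then obtain c d where cd: "(c,d) \<in> Mx" "c \<noteq> d" "w = lt {c,d}" using SE_E by blast
    show "w \<in> insert (lt {a,b}) (SE Rx)"
    proof (cases "(c,d) \<in> Rx")
      case True
      then show ?thesis using SE_I cd by auto
    next
      case False
      then have "c \<in> Ux" "d \<in> Ux" using cd(1) unfolding Mx_def by auto
      then have "lt {c,d} = lt {a,b} \<or> (\<exists>e f. (e,f) \<in> Rx \<and> e \<noteq> f \<and> e \<in> Ux \<and> lt {c,d} = lt {e,f})"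
        using F cd(2) by simp
      then show ?thesis using SE_I cd(3) by auto
    qed
  qed
  show "insert (lt {a,b}) (SE Rx) \<subseteq> SE Mx"
  proof -
    have "(a,b) \<in> Mx" using inU unfolding Mx_def by simp
    then have "lt {a,b} \<in> SE Mx" using SE_I ne by simp
    moreover have "SE Rx \<subseteq> SE Mx" using SE_mono unfolding Mx_def by simp
    ultimately show ?thesis by simp
  qed
qed

lemma M_unique:
  assumes g1: "good E1" and s1: "Rx \<subseteq> E1" and s2: "E1 \<subseteq> Ry" and v1: "lt {a,b} \<in> SE E1"
  shows "Mx \<subseteq> E1"
proof -
  have E1: "equivI E1" using g1 unfolding good_def by simp
  obtain p q where pq: "(p,q) \<in> E1" "p \<noteq> q" "lt {a,b} = lt {p,q}" using SE_E[OF v1] by blast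
  have pqy: "(p,q) \<in> Ry" using pq(1) s2 by auto
  have pqI: "p \<in> I" "q \<in> I" using eqvI2[OF pq(1) E1] by auto
  have pa: "(p,a) \<in> Ry" using compatD[OF Ex_eqv(4) pqy ab pq(2) ne] pq(3) by simp
  have "(lt {p,a} \<subset> lt {p,q} \<and> lt {q,b} \<subset> lt {p,q}) \<or> (lt {p,b} \<subset> lt {p,q} \<and> lt {q,a} \<subset> lt {p,q})"
    using four_point[OF pqI abI pq(2) ne] pq(3) by simp
  have yt: "(x,y) \<in> Ry \<Longrightarrow> (y,z) \<in> Ry \<Longrightarrow> (x,z) \<in> Ry" for x y z using eqvD(4)[OF Ex_eqv(3)] by simp
  have ys: "(x,y) \<in> Ry \<Longrightarrow> (y,x) \<in> Ry" for x y using eqvD(3)[OF Ex_eqv(3)] by simp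
  have et: "(x,y) \<in> E1 \<Longrightarrow> (y,z) \<in> E1 \<Longrightarrow> (x,z) \<in> E1" for x y z using eqvD(4)[OF E1] by simp
  have es: "(x,y) \<in> E1 \<Longrightarrow> (y,x) \<in> E1" for x y using eqvD(3)[OF E1] by simp
  have abE: "(a,b) \<in> E1"
  proof (cases "lt {p,a} \<subset> lt {p,q} \<and> lt {q,b} \<subset> lt {p,q}")
    case True
    have "(p,a) \<in> Rx" using claim[OF pa] True pq(3) by simp
    moreover have "(q,b) \<in> Ry" using pa pqy ab yt ys by blast
    then have "(q,b) \<in> Rx" using claim True pq(3) by simp
    ultimately have "(p,a) \<in> E1" "(q,b) \<in> E1" using s1 by auto
    then show ?thesis using pq(1) et es by blast
  next
    case False
    then have h: "lt {p,b} \<subset> lt {p,q} \<and> lt {q,a} \<subset> lt {p,q}"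
      using \<open>(lt {p,a} \<subset> lt {p,q} \<and> lt {q,b} \<subset> lt {p,q}) \<or> _\<close> by blast
    have "(p,b) \<in> Ry" using pa ab yt by blast
    then have "(p,b) \<in> Rx" using claim h pq(3) by simp
    moreover have "(q,a) \<in> Ry" using pa pqy yt ys by blast
    then have "(q,a) \<in> Rx" using claim h pq(3) by simp
    ultimately have "(p,b) \<in> E1" "(q,a) \<in> E1" using s1 by auto
    then show ?thesis using pq(1) et es by blast
  qed
  show ?thesis
  proof
    fix x assume "x \<in> Mx"
    then consider "x \<in> Rx" | "x \<in> Ux \<times> Ux" unfolding Mx_def by auto
    then show "x \<in> E1"
    proof cases
      case 1 then show ?thesis using s1 by auto
    next
      case 2
      then obtain c d where cd: "x = (c,d)" "c \<in> Ux" "d \<in> Ux" by auto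
      have toA: "(a,u) \<in> E1" if "u \<in> Ux" for u
      proof -
        have "(a,u) \<in> Rx \<or> (b,u) \<in> Rx" using that unfolding Ux_def by auto
        then show ?thesis using s1 abE et by blast
      qed
      show ?thesis using toA[OF cd(2)] toA[OF cd(3)] cd(1) et es by blast
    qed
  qed
qed

lemma M_ne: "Mx \<noteq> Rx"
proof -
  have "(a,b) \<in> Mx" using inU unfolding Mx_def by simp
  then show ?thesis using nab by auto
qed

lemma M_between:
  assumes E': "equivI E'" and s1: "Rx \<subseteq> E'" and s2: "E' \<subseteq> Mx" and n: "E' \<noteq> Rx"
  shows "E' = Mx"
proof -
  obtain p q where pq: "(p,q) \<in> E'" "(p,q) \<notin> Rx" using s1 n by auto
  then have pqU: "p \<in> Ux" "q \<in> Ux" using s2 unfolding Mx_def by auto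
  have et: "(x,y) \<in> E' \<Longrightarrow> (y,z) \<in> E' \<Longrightarrow> (x,z) \<in> E'" for x y z using eqvD(4)[OF E'] by simp
  have es: "(x,y) \<in> E' \<Longrightarrow> (y,x) \<in> E'" for x y using eqvD(3)[OF E'] by simp
  have xt: "(x,y) \<in> Rx \<Longrightarrow> (y,z) \<in> Rx \<Longrightarrow> (x,z) \<in> Rx" for x y z using eqvD(4)[OF Ex_eqv(1)] by simp
  have xs: "(x,y) \<in> Rx \<Longrightarrow> (y,x) \<in> Rx" for x y using eqvD(3)[OF Ex_eqv(1)] by simp
  have "(a,p) \<in> Rx \<or> (b,p) \<in> Rx" "(a,q) \<in> Rx \<or> (b,q) \<in> Rx" using pqU unfolding Ux_def by auto
  then have "((a,p) \<in> Rx \<and> (b,q) \<in> Rx) \<or> ((b,p) \<in> Rx \<and> (a,q) \<in> Rx)"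
    using pq(2) xt xs by blast
  then have abE: "(a,b) \<in> E'" using pq(1) s1 et es by blast
  have "Mx \<subseteq> E'"
  proof
    fix x assume "x \<in> Mx"
    then consider "x \<in> Rx" | "x \<in> Ux \<times> Ux" unfolding Mx_def by auto
    then show "x \<in> E'"
    proof cases
      case 1 then show ?thesis using s1 by auto
    next
      case 2
      then obtain c d where cd: "x = (c,d)" "c \<in> Ux" "d \<in> Ux" by auto
      have toA: "(a,u) \<in> E'" if "u \<in> Ux" for u
      proof -
        have "(a,u) \<in> Rx \<or> (b,u) \<in> Rx" using that unfolding Ux_def by auto
        then show ?thesis using s1 abE et by blast
      qed
      show ?thesis using toA[OF cd(2)] toA[OF cd(3)] cd(1) et es by blast
    qed
  qed
  then show ?thesis using s2 by simp
qed

end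

end


lemma chain_label_Nil: "chain_label lab [x] = []"
  unfolding chain_label_def by simp

lemma chain_label_Cons: "chain_label lab (x # z # rest) = lab x z # chain_label lab (z # rest)"
proof -
  have u: "[0..<Suc n] = 0 # map Suc [0..<n]" for n :: nat
    by (simp only: upt_conv_Cons[of 0 "Suc n"] map_Suc_upt zero_less_Suc)
  have "[0..<length (x # z # rest) - 1] = 0 # map Suc [0..<length (z # rest) - 1]"
    using u[of "length rest"] by simp
  then show ?thesis unfolding chain_label_def by simp
qed

lemma sat_chain_single: "sat_chain P le x y [a] \<longleftrightarrow> a = x \<and> x = y \<and> x \<in> P"
  unfolding sat_chain_def by auto

lemma covers_P: "covers P le x y \<Longrightarrow> x \<in> P \<and> y \<in> P \<and> le x y \<and> x \<noteq> y"
  unfolding covers_def by simp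

lemma sat_chainD:
  assumes "sat_chain P le x y cs"
  shows "cs \<noteq> []" "hd cs = x" "last cs = y" "set cs \<subseteq> P" "\<And>i. Suc i < length cs \<Longrightarrow> covers P le (cs!i) (cs!Suc i)"
  using assms unfolding sat_chain_def by simp_all

lemma sat_chainI:
  assumes "cs \<noteq> []" "hd cs = x" "last cs = y" "set cs \<subseteq> P" "\<And>i. Suc i < length cs \<Longrightarrow> covers P le (cs!i) (cs!Suc i)"
  shows "sat_chain P le x y cs"
  using assms unfolding sat_chain_def by simp

lemma sat_chain_Cons:
  "sat_chain P le x y (a # b # rest) \<longleftrightarrow> a = x \<and> covers P le a b \<and> sat_chain P le b y (b # rest)"
proof
  assume s: "sat_chain P le x y (a # b # rest)"
  note sd = sat_chainD[OF s]
  have "covers P le ((a # b # rest) ! 0) ((a # b # rest) ! Suc 0)" using sd(5)[of 0] by simp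
  then have c0: "covers P le a b" by simp
  have cs: "covers P le ((b # rest) ! i) ((b # rest) ! Suc i)" if "Suc i < length (b # rest)" for i
    using sd(5)[of "Suc i"] that by simp
  have "sat_chain P le b y (b # rest)"
    by (rule sat_chainI) (use sd(3,4) cs in simp_all)
  then show "a = x \<and> covers P le a b \<and> sat_chain P le b y (b # rest)" using c0 sd(2) by simp
next
  assume r: "a = x \<and> covers P le a b \<and> sat_chain P le b y (b # rest)"
  then have ax: "a = x" and c0: "covers P le a b" and s: "sat_chain P le b y (b # rest)" by auto
  note sd = sat_chainD[OF s]
  have cs: "covers P le ((a # b # rest) ! i) ((a # b # rest) ! Suc i)" if i: "Suc i < length (a # b # rest)" for i
  proof (cases i)
    case 0
    then show ?thesis using c0 by simp
  next
    case (Suc j)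
    then have "Suc j < length (b # rest)" using i by simp
    then have "covers P le ((b # rest) ! j) ((b # rest) ! Suc j)" using sd(5) by simp
    then show ?thesis using Suc by simp
  qed
  have "a \<in> P" using covers_P[OF c0] by simp
  then show "sat_chain P le x y (a # b # rest)"
    by (intro sat_chainI) (use ax sd(3,4) cs in simp_all)
qed

lemma lex_sorted:
  fixes xs ys :: "nat list"
  assumes "sorted xs" "distinct xs" "distinct ys" "set xs = set ys" "\<not> sorted ys"
  shows "(xs, ys) \<in> lexord {(a,b). a < b}"
  using assms
proof (induction xs arbitrary: ys)
  case Nil
  then show ?case by simp
next
  case (Cons x xs)
  obtain y ys' where ys: "ys = y # ys'" using Cons.prems(4) by (cases ys) auto
  have xmin: "\<forall>u\<in>set xs. x \<le> u" using Cons.prems(1) by simp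
  show ?case
  proof (cases "y = x")
    case True
    have "set xs = set ys'" using Cons.prems(2,3,4) ys True by auto
    moreover have "\<not> sorted ys'" using Cons.prems(5) ys True xmin calculation by simp
    ultimately have "(xs, ys') \<in> lexord {(a,b). a < b}"
      using Cons.IH Cons.prems(1,2,3) ys by simp
    then show ?thesis using ys True by simp
  next
    case False
    then have "y \<in> set xs" using Cons.prems(4) ys by auto
    then have "x < y" using xmin False by force
    then show ?thesis using ys by simp
  qed
qed

lemma covers_between: "covers P le x y \<Longrightarrow> z \<in> P \<Longrightarrow> le x z \<Longrightarrow> le z y \<Longrightarrow> z \<noteq> x \<Longrightarrow> z = y"
  unfolding covers_def by blast

lemma abstract_EL:
  fixes P :: "'x set" and le :: "'x \<Rightarrow> 'x \<Rightarrow> bool" and S :: "'x \<Rightarrow> 'v set" and code :: "'v \<Rightarrow> nat"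
  assumes finP: "finite P"
    and refl: "\<And>x. x \<in> P \<Longrightarrow> le x x"
    and trans: "\<And>x y z. x \<in> P \<Longrightarrow> y \<in> P \<Longrightarrow> z \<in> P \<Longrightarrow> le x y \<Longrightarrow> le y z \<Longrightarrow> le x z"
    and finS: "\<And>x. x \<in> P \<Longrightarrow> finite (S x)"
    and mono: "\<And>x y. x \<in> P \<Longrightarrow> y \<in> P \<Longrightarrow> le x y \<Longrightarrow> S x \<subseteq> S y"
    and eq: "\<And>x y. x \<in> P \<Longrightarrow> y \<in> P \<Longrightarrow> le x y \<Longrightarrow> S x = S y \<Longrightarrow> x = y"
    and inj: "inj_on code (\<Union>x\<in>P. S x)"
    and ex: "\<And>x y v. x \<in> P \<Longrightarrow> y \<in> P \<Longrightarrow> le x y \<Longrightarrow> v \<in> S y - S x \<Longrightarrow> (\<forall>u\<in>S y - S x. code v \<le> code u) \<Longrightarrow>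
        \<exists>z\<in>P. covers P le x z \<and> le z y \<and> S z = insert v (S x) \<and>
          (\<forall>z1\<in>P. covers P le x z1 \<and> le z1 y \<and> v \<in> S z1 \<longrightarrow> z1 = z)"
  shows "EL_shellable P le"
proof -
  define lab where "lab x y = code (SOME v. v \<in> S y - S x)" for x y
  have minex: "\<exists>v\<in>A. \<forall>u\<in>A. code v \<le> code u" if ne: "A \<noteq> {}" for A :: "'v set"
  proof -
    obtain k where "k \<in> A" using ne by auto
    then obtain v where "v \<in> A" "\<forall>u. u \<in> A \<longrightarrow> code v \<le> code u"
      using ex_has_least_nat[of "\<lambda>v. v \<in> A" k code] by auto
    then show ?thesis by auto
  qed
  have cov: "\<exists>v. v \<notin> S x \<and> S y = insert v (S x)" if c: "covers P le x y" for x y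
  proof -
    have xy: "x \<in> P" "y \<in> P" "le x y" "x \<noteq> y" using covers_P[OF c] by auto
    have sub: "S x \<subseteq> S y" using mono xy by simp
    have "S x \<noteq> S y" using eq[OF xy(1,2,3)] xy(4) by auto
    then have "S y - S x \<noteq> {}" using sub by auto
    then have "\<exists>v\<in>S y - S x. \<forall>u\<in>S y - S x. code v \<le> code u" by (rule minex)
      then obtain v where v: "v \<in> S y - S x" "\<forall>u\<in>S y - S x. code v \<le> code u" by auto
    obtain z where z: "z \<in> P" "covers P le x z" "le z y" "S z = insert v (S x)"
      using ex[OF xy(1,2,3) v] by blast
    have "z \<noteq> x" "le x z" using covers_P[OF z(2)] by auto
    then have "z = y" using covers_between[OF c z(1) _ z(3)] by simp
    then show ?thesis using z(4) v(1) by auto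
  qed
  have lab_cov: "lab x y = code v" if "v \<notin> S x" "S y = insert v (S x)" for x y v
  proof -
    have "S y - S x = {v}" using that by auto
    then show ?thesis unfolding lab_def by simp
  qed
  have U: "S x \<subseteq> (\<Union>x\<in>P. S x)" if "x \<in> P" for x using that by auto
  have CH: "x \<in> P \<and> y \<in> P \<and> le x y \<and> S x \<subseteq> S y \<and> set (chain_label lab cs) = code ` (S y - S x) \<and>
      distinct (chain_label lab cs)" if "sat_chain P le x y cs" for cs x y
    using that
  proof (induction cs arbitrary: x)
    case Nil
    then show ?case unfolding sat_chain_def by simp
  next
    case (Cons a t)
    show ?case
    proof (cases t)
      case Nil
      then have "sat_chain P le x y [a]" using Cons.prems by simp
      then have "a = x" "x = y" "x \<in> P" unfolding sat_chain_single by auto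
      moreover have "chain_label lab [a] = []" by (rule chain_label_Nil)
      ultimately show ?thesis using Nil refl[of x] by simp
    next
      case (Cons b rest)
      then have ax: "a = x" and c: "covers P le a b" and s: "sat_chain P le b y (b # rest)"
        using Cons.prems by (auto simp: sat_chain_Cons)
      have IH: "b \<in> P \<and> y \<in> P \<and> le b y \<and> S b \<subseteq> S y \<and> set (chain_label lab (b # rest)) = code ` (S y - S b) \<and>
        distinct (chain_label lab (b # rest))" using Cons.IH[OF s[folded Cons]] Cons by simp
      obtain v where v: "v \<notin> S x" "S b = insert v (S x)" using cov[OF c] ax by blast
      have xP: "x \<in> P" "le x b" using covers_P[OF c] ax by auto
      have lab1: "lab x b = code v" using lab_cov[OF v] .
      have le: "le x y" using trans[OF xP(1) _ _ xP(2)] IH by blast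
      have diff: "S y - S x = insert v (S y - S b)" using v IH by auto
      have "code v \<notin> code ` (S y - S b)"
      proof
        assume "code v \<in> code ` (S y - S b)"
        then obtain u where u: "u \<in> S y - S b" "code u = code v" by auto
        have "u \<in> (\<Union>x\<in>P. S x)" "v \<in> (\<Union>x\<in>P. S x)" using u(1) IH v(2) by auto
        then have "u = v" using inj_onD[OF inj u(2)] by simp
        then show False using u(1) v(2) by simp
      qed
      have L: "chain_label lab (a # t) = code v # chain_label lab (b # rest)"
        using chain_label_Cons[of lab a b rest] Cons ax lab1 by simp
      have s1: "set (chain_label lab (a # t)) = code ` (S y - S x)" using L IH diff by simp
      have s2: "distinct (chain_label lab (a # t))" using L IH \<open>code v \<notin> code ` (S y - S b)\<close> by simp
      have s3: "S x \<subseteq> S y" using v IH by auto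
      show ?thesis using s1 s2 s3 le xP(1) IH by simp
    qed
  qed
  have EX: "\<exists>cs. sat_chain P le x y cs \<and> sorted (chain_label lab cs)"
    if "x \<in> P" "y \<in> P" "le x y" for x y
    using that
  proof (induction "card (S y - S x)" arbitrary: x rule: less_induct)
    case less
    show ?case
    proof (cases "S x = S y")
      case True
      then have "x = y" using eq less.prems by simp
      then have "sat_chain P le x y [x]" using less.prems by (intro sat_chain_single[THEN iffD2]) simp
      moreover have "sorted (chain_label lab [x])" by (simp add: chain_label_Nil)
      ultimately show ?thesis by blast
    next
      case False
      have sub: "S x \<subseteq> S y" using mono less.prems by simp
      then have "S y - S x \<noteq> {}" using False by auto
      then have "\<exists>v\<in>S y - S x. \<forall>u\<in>S y - S x. code v \<le> code u" by (rule minex)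
      then obtain v where v: "v \<in> S y - S x" "\<forall>u\<in>S y - S x. code v \<le> code u" by auto
      obtain z where z: "z \<in> P" "covers P le x z" "le z y" "S z = insert v (S x)"
        using ex[OF less.prems v] by blast
      have "S y - S z = (S y - S x) - {v}" using z(4) by auto
      moreover have "finite (S y - S x)" using finS less.prems by simp
      ultimately have "card (S y - S z) < card (S y - S x)" using card_Diff1_less[of "S y - S x" v] v(1) by simp
      then obtain cs where cs: "sat_chain P le z y cs" "sorted (chain_label lab cs)"
        using less.hyps[OF _ z(1) less.prems(2) z(3)] by blast
      obtain rest where rest: "cs = z # rest" using sat_chainD(1,2)[OF cs(1)] by (cases cs) auto
      have sc: "sat_chain P le x y (x # z # rest)" using z(2) cs(1) rest by (simp add: sat_chain_Cons)
      have lab1: "lab x z = code v" using lab_cov[of v x z] v(1) z(4) by simp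
      have "set (chain_label lab cs) = code ` (S y - S z)" using CH[OF cs(1)] by simp
      then have "\<forall>l\<in>set (chain_label lab (z # rest)). code v \<le> l" using v(2) rest z(4) by auto
      then have "sorted (chain_label lab (x # z # rest))"
        using cs(2) rest lab1 chain_label_Cons[of lab x z rest] by simp
      then show ?thesis using sc by blast
    qed
  qed
  have first: "\<exists>v. v \<in> S y - S x \<and> (\<forall>u\<in>S y - S x. code v \<le> code u) \<and> S b = insert v (S x) \<and> le b y"
    if s: "sat_chain P le x y (x # b # rest)" and so: "sorted (chain_label lab (x # b # rest))" for x y b rest
  proof -
    have c: "covers P le x b" and s2: "sat_chain P le b y (b # rest)" using s by (auto simp: sat_chain_Cons)
    obtain v where v: "v \<notin> S x" "S b = insert v (S x)" using cov[OF c] by blast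
    note C2 = CH[OF s2]
    have lab1: "lab x b = code v" using lab_cov[OF v] .
    have "\<forall>l\<in>set (chain_label lab (b # rest)). code v \<le> l"
      using so lab1 chain_label_Cons[of lab x b rest] by simp
    then have m: "\<forall>u\<in>S y - S b. code v \<le> code u" using C2 by auto
    have "S y - S x = insert v (S y - S b)" using v C2 by auto
    then have "v \<in> S y - S x" "\<forall>u\<in>S y - S x. code v \<le> code u" using m by auto
    then show ?thesis using v C2 by blast
  qed
  have UNIQ: "cs = cs'" if "sat_chain P le x y cs" "sorted (chain_label lab cs)"
    "sat_chain P le x y cs'" "sorted (chain_label lab cs')" for cs cs' x y
    using that
  proof (induction cs arbitrary: x cs')
    case Nil
    then show ?case unfolding sat_chain_def by simp
  next
    case (Cons a t)
    have ax: "a = x" using sat_chainD(2)[OF Cons.prems(1)] by simp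
    obtain a' t' where cs': "cs' = a' # t'" using sat_chainD(1)[OF Cons.prems(3)] by (cases cs') auto
    have ax': "a' = x" using sat_chainD(2)[OF Cons.prems(3)] cs' by simp
    have nonstep: False if "sat_chain P le x y [x]" "sat_chain P le x y (x # b # r)" for b r
    proof -
      have "x = y" using that(1) by (simp add: sat_chain_single)
      have c: "covers P le x b" and s2: "sat_chain P le b y (b # r)" using that(2) by (auto simp: sat_chain_Cons)
      obtain v where v: "v \<notin> S x" "S b = insert v (S x)" using cov[OF c] by blast
      have "S b \<subseteq> S y" using CH[OF s2] by simp
      then show False using v \<open>x = y\<close> by auto
    qed
    show ?case
    proof (cases t)
      case Nil
      show ?thesis
      proof (cases t')
        case Nil then show ?thesis using \<open>t = []\<close> ax ax' cs' by simp
      next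
        case (Cons b r)
        then show ?thesis using nonstep[of b r] Cons.prems(1,3) \<open>t = []\<close> ax ax' cs' by simp
      qed
    next
      case (Cons b rest)
      show ?thesis
      proof (cases t')
        case Nil then show ?thesis using nonstep[of b rest] Cons.prems(1,3) \<open>t = b # rest\<close> ax ax' cs' by simp
      next
        case (Cons b' rest')
        have s1: "sat_chain P le x y (x # b # rest)" using Cons.prems(1) \<open>t = b # rest\<close> ax by simp
        have s2: "sat_chain P le x y (x # b' # rest')" using Cons.prems(3) cs' Cons ax' by simp
        have so1: "sorted (chain_label lab (x # b # rest))" using Cons.prems(2) \<open>t = b # rest\<close> ax by simp
        have so2: "sorted (chain_label lab (x # b' # rest'))" using Cons.prems(4) cs' Cons ax' by simp
        obtain v where v: "v \<in> S y - S x" "\<forall>u\<in>S y - S x. code v \<le> code u" "S b = insert v (S x)" "le b y"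
          using first[OF s1 so1] by blast
        obtain v' where v': "v' \<in> S y - S x" "\<forall>u\<in>S y - S x. code v' \<le> code u" "S b' = insert v' (S x)" "le b' y"
          using first[OF s2 so2] by blast
        have c1: "covers P le x b" and c2: "covers P le x b'" using s1 s2 by (auto simp: sat_chain_Cons)
        have xyP: "x \<in> P" "y \<in> P" "le x y" using CH[OF s1] by auto
        have "code v = code v'" using v v' by force
        moreover have "v \<in> (\<Union>x\<in>P. S x)" "v' \<in> (\<Union>x\<in>P. S x)" using v(1) v'(1) xyP by auto
        ultimately have "v = v'" using inj_onD[OF inj] by blast
        obtain z where z: "z \<in> P" "\<forall>z1\<in>P. covers P le x z1 \<and> le z1 y \<and> v \<in> S z1 \<longrightarrow> z1 = z"
          using ex[OF xyP v(1,2)] by blast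
        have bP: "b \<in> P" "b' \<in> P" using covers_P[OF c1] covers_P[OF c2] by auto
        have "b = z" using z(2) bP(1) c1 v(3,4) by simp
        moreover have "b' = z" using z(2) bP(2) c2 v'(3,4) \<open>v = v'\<close> by simp
        ultimately have bb: "b = b'" by simp
        have t1: "sat_chain P le b y (b # rest)" using s1 by (simp add: sat_chain_Cons)
        have t2: "sat_chain P le b y (b # rest')" using s2 bb by (simp add: sat_chain_Cons)
        have o1: "sorted (chain_label lab (b # rest))" using so1 chain_label_Cons[of lab x b rest] by simp
        have o2: "sorted (chain_label lab (b # rest'))" using so2 chain_label_Cons[of lab x b' rest'] bb by simp
        have "b # rest = b # rest'" using Cons.IH[of b "b # rest'"] t1 t2 o1 o2 \<open>t = b # rest\<close> by simp
        then show ?thesis using ax ax' cs' Cons \<open>t = b # rest\<close> bb by simp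
      qed
    qed
  qed
  have EL: "EL_labeling P le lab"
    unfolding EL_labeling_def
  proof (intro ballI impI conjI allI)
    fix x y assume xy: "x \<in> P" "y \<in> P" "le x y"
    show "\<exists>!cs. sat_chain P le x y cs \<and> sorted (chain_label lab cs)"
      using EX[OF xy] UNIQ by blast
    fix cs cs'
    assume a: "sat_chain P le x y cs \<and> sorted (chain_label lab cs) \<and> sat_chain P le x y cs' \<and> cs' \<noteq> cs"
    then have n: "\<not> sorted (chain_label lab cs')" using UNIQ by blast
    note C1 = CH[of x y cs] and C2 = CH[of x y cs']
    show "(chain_label lab cs, chain_label lab cs') \<in> lexord {(a, b). a < b}"
      using lex_sorted[of "chain_label lab cs" "chain_label lab cs'"] a n C1 C2 by simp
  qed
  have gr: "graded P le"
    unfolding graded_def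
  proof (intro conjI finP exI[of _ "\<lambda>x. card (S x)"] ballI impI)
    fix x y assume xy: "x \<in> P" "y \<in> P" and c: "covers P le x y"
    obtain v where v: "v \<notin> S x" "S y = insert v (S x)" using cov[OF c] by blast
    then show "card (S y) = card (S x) + 1" using finS[OF xy(1)] by simp
  qed
  show ?thesis unfolding EL_shellable_def using EL gr by blast
qed



context tr
begin

lemma le_iff:
  assumes xP: "x \<in> P" and yP: "y \<in> P"
  shows "forest_le I x y \<longleftrightarrow> rel x \<subseteq> rel y"
proof
  assume le: "forest_le I x y"
  have ex: "\<forall>C\<in>x. \<exists>D\<in>y. C \<subseteq> D" using forest_le_D[OF finI le] by simp
  show "rel x \<subseteq> rel y"
  proof (rule subrelI)
    fix a b assume "(a,b) \<in> rel x"
    then have "\<exists>C\<in>x. a \<in> C \<and> b \<in> C" unfolding rel_def by simp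
    then obtain C where C: "C \<in> x" "a \<in> C" "b \<in> C" by (elim bexE conjE)
    have "\<exists>D\<in>y. C \<subseteq> D" using ex C(1) by simp
    then obtain D where D: "D \<in> y" "C \<subseteq> D" by (elim bexE)
    have "\<exists>D\<in>y. a \<in> D \<and> b \<in> D" using D C by blast
    then show "(a,b) \<in> rel y" unfolding rel_def by simp
  qed
next
  assume sub: "rel x \<subseteq> rel y"
  have fx: "is_forest I x" and ix: "inj_on lt (inner x)" using xP P_iff by auto
  have fy: "is_forest I y" and iy: "inj_on lt (inner y)" using yP P_iff by auto
  have ey: "equivI (rel y)" using P_good(1)[OF yP] unfolding good_def by simp
  have yR: "y = Rf (rel y)" using P_good(2)[OF yP] .
  have ex: "\<forall>C\<in>x. \<exists>D\<in>y. C \<subseteq> D"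
  proof
    fix C assume C: "C \<in> x"
    obtain a where a: "a \<in> C" using forest_ne[OF fx C] by auto
    have aI: "a \<in> I" using forest_sub[OF fx C] a by auto
    have "C \<subseteq> rel x `` {a}" using blk(3)[OF fx ix aI C a] .
    also have "\<dots> \<subseteq> rel y `` {a}" using sub by auto
    finally have "C \<subseteq> rel y `` {a}" .
    moreover have "rel y `` {a} \<in> y" using blk(1)[OF fy iy aI] .
    ultimately show "\<exists>D\<in>y. C \<subseteq> D" by blast
  qed
  have lubf: "lub y C = rel y `` {a} \<inter> lt C" if C: "C \<in> x" and a: "a \<in> C" for C a
  proof (rule lub_eq)
    have aI: "a \<in> I" using forest_sub[OF fx C] a by auto
    have Cs: "C \<subseteq> rel y `` {a}" using blk(3)[OF fx ix aI C a] sub by auto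
    note LC = H_ltI[OF fx ix C]
    show "rel y `` {a} \<inter> lt C \<in> y"
      using part2[OF fy iy blk(1)[OF fy iy aI] conjunct1[OF LC] blk(2)[OF fy iy aI]] LC a by auto
    show "C \<subseteq> rel y `` {a} \<inter> lt C" using Cs LC by auto
    show "\<forall>D'\<in>y. C \<subseteq> D' \<longrightarrow> rel y `` {a} \<inter> lt C \<subseteq> D'"
    proof (intro ballI impI)
      fix D' assume D': "D' \<in> y" "C \<subseteq> D'"
      have D'R: "D' \<in> Rf (rel y)" using D'(1) yR by simp
      have aD: "a \<in> D'" using a D'(2) by auto
      have f: "D' = rel y `` {a} \<inter> lt D'" "lt D' \<in> T" "D' \<subseteq> lt D'"
        using Rf_form(1,3,4)[OF ey D'R aD] by auto
      have "C \<subseteq> lt D'" using D'(2) f(3) by auto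
      then have "lt C \<subseteq> lt D'" using LC f(2) by simp
      then show "rel y `` {a} \<inter> lt C \<subseteq> D'" using f(1) by auto
    qed
  qed
  have ltl: "lt (lub y C) = lt C" if C: "C \<in> x" for C
  proof -
    obtain a where a: "a \<in> C" using forest_ne[OF fx C] by auto
    have aI: "a \<in> I" using forest_sub[OF fx C] a by auto
    note LC = H_ltI[OF fx ix C]
    have Cs: "C \<subseteq> rel y `` {a}" using blk(3)[OF fx ix aI C a] sub by auto
    define X where "X = rel y `` {a} \<inter> lt C"
    have X: "C \<subseteq> X" "X \<subseteq> lt C" using Cs LC X_def by auto
    have XI: "X \<subseteq> I" using X(2) forest_sub[OF Tf conjunct1[OF LC]] by auto
    have Xne: "X \<noteq> {}" using X(1) a by auto
    note LX = lt[OF Xne XI]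
    have "lt X \<subseteq> lt C" using LX(3) LC X(2) by simp
    moreover have "C \<subseteq> lt X" using X(1) LX(2) by auto
    then have "lt C \<subseteq> lt X" using LC LX(1) by simp
    ultimately have "lt X = lt C" by simp
    then show ?thesis using lubf[OF C a] X_def by simp
  qed
  have inj: "inj_on (lub y) (inner x)"
  proof (rule inj_onI)
    fix C1 C2 assume C1: "C1 \<in> inner x" and C2: "C2 \<in> inner x" and e: "lub y C1 = lub y C2"
    have "C1 \<in> x" "C2 \<in> x" using C1 C2 unfolding inner_def by auto
    then have "lt C1 = lt C2" using ltl e by metis
    then show "C1 = C2" using inj_onD[OF ix _ C1 C2] by simp
  qed
  show "forest_le I x y" using forest_le_I[OF finI fx fy ex inj] .
qed

lemma code_ex: "\<exists>code :: 'a set \<Rightarrow> nat. inj_on code T \<and> (\<forall>A\<in>T. \<forall>B\<in>T. A \<subset> B \<longrightarrow> code A < code B)"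
proof -
  obtain h where h: "bij_betw h T {0..<card T}" using ex_bij_betw_finite_nat[OF finT] by blast
  define n where "n = card T"
  define code where "code A = card A * n + h A" for A
  have hlt: "h A < n" if "A \<in> T" for A using h that n_def unfolding bij_betw_def by auto
  have "inj_on code T"
  proof (rule inj_onI)
    fix A B assume A: "A \<in> T" and B: "B \<in> T" and e: "code A = code B"
    have "code A mod n = h A" unfolding code_def using hlt[OF A] by simp
    moreover have "code B mod n = h B" unfolding code_def using hlt[OF B] by simp
    ultimately have "h A = h B" using e by simp
    then show "A = B" using h A B unfolding bij_betw_def inj_on_def by blast
  qed
  moreover have "\<forall>A\<in>T. \<forall>B\<in>T. A \<subset> B \<longrightarrow> code A < code B"
  proof (intro ballI impI)
    fix A B assume A: "A \<in> T" and B: "B \<in> T" and ps: "A \<subset> B"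
    have "card A < card B" using psubset_card_mono[OF T_fin[OF B] ps] .
    then have "card A + 1 \<le> card B" by simp
    then have "(card A + 1) * n \<le> card B * n" by (rule mult_right_mono) simp
    then have "card A * n + n \<le> card B * n" by simp
    then show "code A < code B" unfolding code_def using hlt[OF A] by simp
  qed
  ultimately show ?thesis by blast
qed

theorem main: "EL_shellable P (forest_le I)"
proof -
  obtain code :: "'a set \<Rightarrow> nat" where cinj: "inj_on code T" and cmono: "\<forall>A\<in>T. \<forall>B\<in>T. A \<subset> B \<longrightarrow> code A < code B"
    using code_ex by blast
  let ?S = "\<lambda>H. SE (rel H)"
  have gd: "good (rel H)" if "H \<in> P" for H using P_good(1)[OF that] .
  have eqv: "equivI (rel H)" if "H \<in> P" for H using gd[OF that] unfolding good_def by simp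
  have ST: "?S H \<subseteq> T" if "H \<in> P" for H using SE_T[OF eqv[OF that]] .
  have finP: "finite P"
  proof -
    have "P \<subseteq> Pow (Pow I)"
    proof
      fix H assume "H \<in> P"
      then have fH: "is_forest I H" using P_iff by simp
      have "H \<subseteq> Pow I" using forest_sub[OF fH] by blast
      then show "H \<in> Pow (Pow I)" by simp
    qed
    moreover have "finite (Pow (Pow I))" using finI by simp
    ultimately show ?thesis using finite_subset by blast
  qed
  show ?thesis
  proof (rule abstract_EL[where S = ?S and code = code])
    show "finite P" by (rule finP)
    show "forest_le I x x" if "x \<in> P" for x using le_iff[OF that that] by simp
    show "forest_le I x z" if "x \<in> P" "y \<in> P" "z \<in> P" "forest_le I x y" "forest_le I y z" for x y z
    proof -
      have "rel x \<subseteq> rel y" using le_iff[OF that(1,2)] that(4) by simp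
      moreover have "rel y \<subseteq> rel z" using le_iff[OF that(2,3)] that(5) by simp
      ultimately have "rel x \<subseteq> rel z" by simp
      then show ?thesis using le_iff[OF that(1,3)] by simp
    qed
    show "finite (?S x)" if "x \<in> P" for x using ST[OF that] finT by (meson rev_finite_subset)
    show "?S x \<subseteq> ?S y" if "x \<in> P" "y \<in> P" "forest_le I x y" for x y
    proof -
      have "rel x \<subseteq> rel y" using le_iff[OF that(1,2)] that(3) by simp
      then show ?thesis by (rule SE_mono)
    qed
    show "x = y" if xy: "x \<in> P" "y \<in> P" "forest_le I x y" "?S x = ?S y" for x y
    proof -
      have s: "rel x \<subseteq> rel y" using le_iff[OF xy(1,2)] xy(3) by simp
      have "rel y \<subseteq> rel x"
      proof (rule subrelI)
        fix c d assume "(c,d) \<in> rel y"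
        moreover have "\<forall>w\<in>SE (rel y). w \<subseteq> lt {c,d} \<longrightarrow> w \<in> SE (rel x)" using xy(4) by simp
        ultimately show "(c,d) \<in> rel x" using lemK[OF gd[OF xy(1)] gd[OF xy(2)] s] by simp
      qed
      then have "rel x = rel y" using s by simp
      then show "x = y" using P_good(2)[OF xy(1)] P_good(2)[OF xy(2)] by simp
    qed
    have "(\<Union>x\<in>P. ?S x) \<subseteq> T" using ST by (simp add: UN_least)
    then show "inj_on code (\<Union>x\<in>P. ?S x)" using inj_on_subset[OF cinj] by simp
    show "\<exists>z\<in>P. covers P (forest_le I) x z \<and> forest_le I z y \<and> ?S z = insert v (?S x) \<and>
          (\<forall>z1\<in>P. covers P (forest_le I) x z1 \<and> forest_le I z1 y \<and> v \<in> ?S z1 \<longrightarrow> z1 = z)"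
      if xy: "x \<in> P" "y \<in> P" "forest_le I x y" and v: "v \<in> ?S y - ?S x"
        and vm: "\<forall>u\<in>?S y - ?S x. code v \<le> code u" for x y v
    proof -
      have sxy: "rel x \<subseteq> rel y" using le_iff[OF xy(1,2)] xy(3) by simp
      have "v \<in> SE (rel y)" using v by simp
      then obtain a b where ab: "(a,b) \<in> rel y" "a \<noteq> b" "v = lt {a,b}" using SE_E by blast
      have vT: "v \<in> T" using ST[OF xy(2)] v by auto
      have minv: "\<forall>w\<in>?S y. w \<subset> lt {a,b} \<longrightarrow> w \<in> ?S x"
      proof (intro ballI impI)
        fix w assume w: "w \<in> ?S y" "w \<subset> lt {a,b}"
        show "w \<in> ?S x"
        proof (rule ccontr)
          assume "w \<notin> ?S x"
          then have "code v \<le> code w" using vm w(1) by simp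
          moreover have "code w < code v"
          proof -
            have wT: "w \<in> T" using ST[OF xy(2)] w(1) by auto
            then show ?thesis using cmono vT w(2) ab(3) by simp
          qed
          ultimately show False by simp
        qed
      qed
      have vx: "lt {a,b} \<notin> ?S x" using v ab(3) by simp
      note ctx = gd[OF xy(1)] gd[OF xy(2)] sxy ab(1) ab(2) vx minv
      define M where "M = Mx (rel x) a b"
      have Mg: "good M" using M_good[OF ctx] M_def by simp
      define z where "z = Rf M"
      have zP: "z \<in> P" using Rf_P[OF Mg] z_def by simp
      have Me: "equivI M" using Mg unfolding good_def by simp
      have rz: "rel z = M" using Rf_rel[OF Me] z_def by simp
      have le_xz: "forest_le I x z" using le_iff[OF xy(1) zP] rz M_def Mx_def[OF ctx] by auto
      have le_zy: "forest_le I z y" using le_iff[OF zP xy(2)] rz M_def M_sub[OF ctx] by simp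
      have xz: "x \<noteq> z" using rz M_def M_ne[OF ctx] by auto
      have nb: "\<not> (\<exists>w\<in>P. forest_le I x w \<and> forest_le I w z \<and> w \<noteq> x \<and> w \<noteq> z)"
      proof
        assume "\<exists>w\<in>P. forest_le I x w \<and> forest_le I w z \<and> w \<noteq> x \<and> w \<noteq> z"
        then obtain w where w: "w \<in> P" "forest_le I x w" "forest_le I w z" "w \<noteq> x" "w \<noteq> z" by blast
        have s1: "rel x \<subseteq> rel w" using le_iff[OF xy(1) w(1)] w(2) by simp
        have s2: "rel w \<subseteq> M" using le_iff[OF w(1) zP] w(3) rz by simp
        have n: "rel w \<noteq> rel x" using w(4) P_good(2)[OF w(1)] P_good(2)[OF xy(1)] by metis
        have "rel w = M" using M_between[OF ctx eqv[OF w(1)] s1] s2 n M_def by simp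
        then show False using w(5) P_good(2)[OF w(1)] z_def by simp
      qed
      have cov: "covers P (forest_le I) x z"
        unfolding covers_def using xy(1) zP le_xz xz nb by simp
      have Sz: "?S z = insert v (?S x)" using SE_M[OF ctx] rz M_def ab(3) by simp
      have uniq: "\<forall>z1\<in>P. covers P (forest_le I) x z1 \<and> forest_le I z1 y \<and> v \<in> ?S z1 \<longrightarrow> z1 = z"
      proof (intro ballI impI)
        fix z1 assume z1: "z1 \<in> P" and h: "covers P (forest_le I) x z1 \<and> forest_le I z1 y \<and> v \<in> ?S z1"
        have "forest_le I x z1" using covers_P[of P "forest_le I" x z1] h by simp
        then have s1: "rel x \<subseteq> rel z1" using le_iff[OF xy(1) z1] by simp
        have s2: "rel z1 \<subseteq> rel y" using le_iff[OF z1 xy(2)] h by simp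
        have "M \<subseteq> rel z1" using M_unique[OF ctx gd[OF z1] s1 s2] h ab(3) M_def by simp
        then have "forest_le I z z1" using le_iff[OF zP z1] rz by simp
        then have "z = z1" using covers_between[of P "forest_le I" x z1 z] h zP le_xz xz by simp
        then show "z1 = z" by simp
      qed
      show ?thesis using zP cov le_zy Sz uniq by blast
    qed
  qed
qed

end

theorem theorem4p4:
  fixes I :: "'a set" and T :: "'a set set"
  assumes "finite I" and "is_tree I T"
  shows "EL_shellable (forest_interval I (zero_forest I) T) (forest_le I)"
proof -
  interpret tr I T using assms by unfold_locales
  show ?thesis using main unfolding P_def .
qed



end
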